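(* Let $K$ be any $d$-simplex with vertices $P_1,\dots,P_{d+1}$ and local linear basis functions $\phi_{P_j}$. Then for every vertex $P_i$, $$\int_{K^*_{P_i}\cap K}\phi_{P_i}\,dx=m_1|K|,\qquad\int_{K^*_{P_i}\cap K}\phi_{P_j}\,dx=m_2|K|\ (j\ne i),$$ where $m_1=\frac{1}{(d+1)^3}\big(1+(d+1)\sum_{k=1}^d\frac1k\big)$ and $m_2=\frac{1}{d(d+1)^3}\big(d^2+2d-(d+1)\sum_{k=1}^d\frac1k\big)$ (so $m_1+dm_2=\frac1{d+1}$). Consequently the FVEM mass matrix $M=(M_{ij})_{i,j=1}^{N_{vi}}$, $M_{ij}=\int_{K^*_{P_i}}\phi_j\,dx$, satisfies $M_{ii}=m_1|\omega_i|$ and $M_{ij}=m_2|\omega_{ij}|$ for $i\ne j$; in particular $M$ is symmetric.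
   Context: Dual sub-regions: for a simplex $K$ with barycentric coordinates $\lambda$, $K^*_P\cap K=\{x\in K:\lambda_P(x)\ge\lambda_Q(x)\ \forall Q\}$; the dual element $K^*_P$ is their union over elements of the mesh $\mathcal{T}_h$ containing $P$. $\phi_j$ is the continuous piecewise linear nodal basis function of interior vertex $P_j$ ($j=1,\dots,N_{vi}$). $\omega_i$ is the union (patch) of elements containing $P_i$, $\omega_{ij}=\omega_i\cap\omega_j$, and $|\cdot|$ denotes $d$-dimensional volume. *)

theory Defs
  imports "HOL-Analysis.Analysis"
begin

text \<open>A d-simplex in a Euclidean space of dimension d = DIM('a) is given by its
  vertex set V: d+1 affinely independent points; the simplex itself is convex hull V.\<close>
definition is_simplex :: "'a::euclidean_space set \<Rightarrow> bool" where
  "is_simplex V \<longleftrightarrow> finite V \<and> card V = DIM('a) + 1 \<and> \<not> affine_dependent V"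

text \<open>Barycentric coordinates of x w.r.t. the vertex set V (coefficient function
  supported on V); bary V P is the local linear basis function of vertex P.\<close>
definition bary :: "'a::euclidean_space set \<Rightarrow> 'a \<Rightarrow> 'a \<Rightarrow> real" where
  "bary V P x = (THE u. (\<forall>v. v \<notin> V \<longrightarrow> u v = 0) \<and> sum u V = 1
                        \<and> (\<Sum>v\<in>V. u v *\<^sub>R v) = x) P"

definition dual_sub :: "'a::euclidean_space set \<Rightarrow> 'a \<Rightarrow> 'a set" where
  "dual_sub V P = {x \<in> convex hull V. \<forall>Q\<in>V. bary V Q x \<le> bary V P x}"

definition harm :: "nat \<Rightarrow> real" where
  "harm d = (\<Sum>k=1..d. 1 / real k)"

definition m1 :: "nat \<Rightarrow> real" where
  "m1 d = 1 / (real d + 1) ^ 3 * (1 + (real d + 1) * harm d)"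

definition m2 :: "nat \<Rightarrow> real" where
  "m2 d = 1 / (real d * (real d + 1) ^ 3) * ((real d)\<^sup>2 + 2 * real d - (real d + 1) * harm d)"

text \<open>A conforming simplicial mesh, given as a finite set of vertex sets of simplices:
  any two elements intersect in the convex hull of their common vertices (a common face,
  possibly empty).\<close>
definition simplicial_mesh :: "'a::euclidean_space set set \<Rightarrow> bool" where
  "simplicial_mesh T \<longleftrightarrow> finite T \<and> (\<forall>K\<in>T. is_simplex K) \<and>
     (\<forall>K1\<in>T. \<forall>K2\<in>T. convex hull K1 \<inter> convex hull K2 = convex hull (K1 \<inter> K2))"

definition mesh_domain :: "'a::euclidean_space set set \<Rightarrow> 'a set" where
  "mesh_domain T = (\<Union>K\<in>T. convex hull K)"

definition interior_vertex :: "'a::euclidean_space set set \<Rightarrow> 'a \<Rightarrow> bool" where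
  "interior_vertex T P \<longleftrightarrow> P \<in> \<Union>T \<and> P \<in> interior (mesh_domain T)"

definition nodal_basis :: "'a::euclidean_space set set \<Rightarrow> 'a \<Rightarrow> 'a \<Rightarrow> real" where
  "nodal_basis T P x =
     (if \<exists>K\<in>T. P \<in> K \<and> x \<in> convex hull K
      then bary (SOME K. K \<in> T \<and> P \<in> K \<and> x \<in> convex hull K) P x else 0)"

definition dual_elem :: "'a::euclidean_space set set \<Rightarrow> 'a \<Rightarrow> 'a set" where
  "dual_elem T P = (\<Union>K\<in>{K\<in>T. P \<in> K}. dual_sub K P)"

definition patch :: "'a::euclidean_space set set \<Rightarrow> 'a \<Rightarrow> 'a set" where
  "patch T P = (\<Union>K\<in>{K\<in>T. P \<in> K}. convex hull K)"

definition mass :: "'a::euclidean_space set set \<Rightarrow> 'a \<Rightarrow> 'a \<Rightarrow> real" where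
  "mass T P Q = integral (dual_elem T P) (nodal_basis T Q)"

end

theory Submission
  imports Defs
begin


lemma simplex_affhull:
  assumes "is_simplex (V::'a::euclidean_space set)"
  shows "affine hull V = UNIV"
proof -
  have "of_nat (card V) = aff_dim V + 1"
    using assms aff_dim_affine_independent unfolding is_simplex_def by blast
  then have "aff_dim V = int DIM('a)" using assms unfolding is_simplex_def by simp
  then show ?thesis by (rule affine_hull_UNIV)
qed

lemma simplex_coords_ex:
  assumes "is_simplex (V::'a::euclidean_space set)"
  shows "\<exists>u. (\<forall>v. v \<notin> V \<longrightarrow> u v = 0) \<and> sum u V = 1 \<and> (\<Sum>v\<in>V. u v *\<^sub>R v) = x"
proof -
  have fin: "finite V" using assms is_simplex_def by blast
  have "x \<in> affine hull V" using simplex_affhull[OF assms] by simp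
  then obtain u where u: "sum u V = 1" "(\<Sum>v\<in>V. u v *\<^sub>R v) = x"
    using affine_hull_finite[OF fin] by blast
  define u' where "u' = (\<lambda>v. if v \<in> V then u v else 0)"
  have "sum u' V = sum u V" by (rule sum.cong) (auto simp: u'_def)
  moreover have "(\<Sum>v\<in>V. u' v *\<^sub>R v) = (\<Sum>v\<in>V. u v *\<^sub>R v)" by (rule sum.cong) (auto simp: u'_def)
  ultimately have "sum u' V = 1" "(\<Sum>v\<in>V. u' v *\<^sub>R v) = x" using u by auto
  moreover have "\<forall>v. v \<notin> V \<longrightarrow> u' v = 0" by (simp add: u'_def)
  ultimately show ?thesis by blast
qed

lemma simplex_coords_uniq:
  assumes "is_simplex (V::'a::euclidean_space set)"
    and "\<forall>v. v \<notin> V \<longrightarrow> u v = 0" "sum u V = 1" "(\<Sum>v\<in>V. u v *\<^sub>R v) = x"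
    and "\<forall>v. v \<notin> V \<longrightarrow> w v = 0" "sum w V = 1" "(\<Sum>v\<in>V. w v *\<^sub>R v) = x"
  shows "u = w"
proof (rule ccontr)
  assume ne: "u \<noteq> w"
  have fin: "finite V" and ind: "\<not> affine_dependent V" using assms(1) is_simplex_def by auto
  define U where "U = (\<lambda>v. u v - w v)"
  have "sum U V = 0" using assms by (simp add: U_def sum_subtractf)
  moreover have "(\<Sum>v\<in>V. U v *\<^sub>R v) = 0"
    using assms by (simp add: U_def scaleR_diff_left sum_subtractf)
  moreover have "\<exists>v\<in>V. U v \<noteq> 0"
  proof (rule ccontr)
    assume "\<not> ?thesis"
    then have "\<forall>v. u v = w v" using assms(2,5) by (metis U_def eq_iff_diff_eq_0)
    then show False using ne by auto
  qed
  ultimately have "affine_dependent V" using affine_dependent_explicit_finite[OF fin] by blast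
  then show False using ind by blast
qed

lemma bary_eq:
  assumes "is_simplex (V::'a::euclidean_space set)"
    and "\<forall>v. v \<notin> V \<longrightarrow> u v = 0" "sum u V = 1" "(\<Sum>v\<in>V. u v *\<^sub>R v) = x"
  shows "bary V R x = u R"
proof -
  have "(THE u. (\<forall>v. v \<notin> V \<longrightarrow> u v = 0) \<and> sum u V = 1 \<and> (\<Sum>v\<in>V. u v *\<^sub>R v) = x) = u"
    apply (rule the_equality)
    using assms apply blast
    using simplex_coords_uniq[OF assms(1)] assms by blast
  then show ?thesis unfolding bary_def by simp
qed

lemma bary_props:
  assumes "is_simplex (V::'a::euclidean_space set)"
  shows "\<forall>v. v \<notin> V \<longrightarrow> bary V v x = 0" "sum (\<lambda>v. bary V v x) V = 1"
    "(\<Sum>v\<in>V. bary V v x *\<^sub>R v) = x"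
proof -
  obtain u where u: "(\<forall>v. v \<notin> V \<longrightarrow> u v = 0)" "sum u V = 1" "(\<Sum>v\<in>V. u v *\<^sub>R v) = x"
    using simplex_coords_ex[OF assms] by blast
  have e: "\<And>R. bary V R x = u R" using bary_eq[OF assms u] .
  show "\<forall>v. v \<notin> V \<longrightarrow> bary V v x = 0" "sum (\<lambda>v. bary V v x) V = 1"
    "(\<Sum>v\<in>V. bary V v x *\<^sub>R v) = x" using u by (simp_all add: e)
qed

lemma bary_vertex:
  assumes "is_simplex (V::'a::euclidean_space set)" "P \<in> V"
  shows "bary V R P = (if R = P then 1 else 0)"
proof -
  have fin: "finite V" using assms is_simplex_def by auto
  have "bary V R P = (\<lambda>v. if v = P then 1 else 0) R"
  proof (rule bary_eq[OF assms(1)])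
    have "(\<Sum>v\<in>V. (if v = P then 1 else 0) *\<^sub>R v) = (\<Sum>v\<in>V. if v = P then P else 0)"
      by (rule sum.cong) auto
    then show "(\<Sum>v\<in>V. (if v = P then 1 else 0) *\<^sub>R v) = P" using fin assms by simp
  qed (use assms fin in auto)
  then show ?thesis by simp
qed

lemma bary_affine_comb:
  assumes "is_simplex (V::'a::euclidean_space set)"
    and "\<forall>v. v \<notin> V \<longrightarrow> a v = 0" "sum a V + r = 1"
  shows "bary V R ((\<Sum>v\<in>V. a v *\<^sub>R v) + r *\<^sub>R y) = a R + r * bary V R y"
proof -
  have fin: "finite V" using assms is_simplex_def by auto
  note b = bary_props[OF assms(1), of y]
  show ?thesis
  proof (rule bary_eq[OF assms(1)])
    show "\<forall>v. v \<notin> V \<longrightarrow> a v + r * bary V v y = 0" using assms b by auto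
    show "(\<Sum>v\<in>V. a v + r * bary V v y) = 1"
      using assms b by (simp add: sum.distrib sum_distrib_left[symmetric])
    show "(\<Sum>v\<in>V. (a v + r * bary V v y) *\<^sub>R v) = (\<Sum>v\<in>V. a v *\<^sub>R v) + r *\<^sub>R y"
    proof -
      have "(\<Sum>v\<in>V. (r * bary V v y) *\<^sub>R v) = r *\<^sub>R (\<Sum>v\<in>V. bary V v y *\<^sub>R v)"
        by (simp add: scaleR_sum_right)
      then show ?thesis using b by (simp add: scaleR_add_left sum.distrib)
    qed
  qed
qed

lemma bary_comb2:
  assumes "is_simplex (V::'a::euclidean_space set)" "a + b = 1"
  shows "bary V R (a *\<^sub>R x + b *\<^sub>R y) = a * bary V R x + b * bary V R y"
proof -
  note bx = bary_props[OF assms(1), of x]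
  have fin: "finite V" using assms is_simplex_def by auto
  have "a *\<^sub>R x = (\<Sum>v\<in>V. (a * bary V v x) *\<^sub>R v)"
  proof -
    have "(\<Sum>v\<in>V. (a * bary V v x) *\<^sub>R v) = a *\<^sub>R (\<Sum>v\<in>V. bary V v x *\<^sub>R v)"
      by (simp add: scaleR_sum_right)
    then show ?thesis using bx by simp
  qed
  moreover have "bary V R ((\<Sum>v\<in>V. (a * bary V v x) *\<^sub>R v) + b *\<^sub>R y) = a * bary V R x + b * bary V R y"
    by (rule bary_affine_comb[OF assms(1)]) (use bx assms in \<open>auto simp: sum_distrib_left[symmetric]\<close>)
  ultimately show ?thesis by simp
qed


lemma simplex_finite: "is_simplex V \<Longrightarrow> finite V" by (simp add: is_simplex_def)

lemma bary_subset_comb: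
  assumes "is_simplex (V::'a::euclidean_space set)" "W \<subseteq> V" "sum u W = 1"
  shows "bary V R (\<Sum>v\<in>W. u v *\<^sub>R v) = (if R \<in> W then u R else 0)"
proof -
  have fin: "finite V" using assms simplex_finite by blast
  then have finW: "finite W" using assms finite_subset by blast
  define u' where "u' = (\<lambda>v. if v \<in> W then u v else 0)"
  have "sum u' V = sum u W"
  proof -
    have "sum u' V = (\<Sum>v\<in>V. if v \<in> W then u v else 0)"
      by (rule sum.cong) (auto simp: u'_def)
    also have "\<dots> = (\<Sum>v\<in>V \<inter> W. u v)" by (rule sum.inter_restrict[OF fin, symmetric])
    also have "V \<inter> W = W" using assms by blast
    finally show ?thesis .
  qed
  moreover have "(\<Sum>v\<in>V. u' v *\<^sub>R v) = (\<Sum>v\<in>W. u v *\<^sub>R v)"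
  proof -
    have "(\<Sum>v\<in>V. u' v *\<^sub>R v) = (\<Sum>v\<in>V. if v \<in> W then u v *\<^sub>R v else 0)"
      by (rule sum.cong) (auto simp: u'_def)
    also have "\<dots> = (\<Sum>v\<in>V \<inter> W. u v *\<^sub>R v)" by (rule sum.inter_restrict[OF fin, symmetric])
    also have "V \<inter> W = W" using assms by blast
    finally show ?thesis .
  qed
  moreover have "\<forall>v. v \<notin> V \<longrightarrow> u' v = 0" using assms by (auto simp: u'_def)
  ultimately have "bary V R (\<Sum>v\<in>W. u v *\<^sub>R v) = u' R"
    using assms(3) by (intro bary_eq[OF assms(1)]) auto
  then show ?thesis by (simp add: u'_def)
qed

lemma hull_bary:
  assumes "is_simplex (V::'a::euclidean_space set)"
  shows "convex hull V = {x. \<forall>R\<in>V. 0 \<le> bary V R x}"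
proof -
  have fin: "finite V" using assms simplex_finite by blast
  have ch: "convex hull V = {y. \<exists>u. (\<forall>x\<in>V. 0 \<le> u x) \<and> sum u V = 1 \<and> sum (\<lambda>x. u x *\<^sub>R x) V = y}"
    by (rule convex_hull_finite[OF fin])
  show ?thesis
  proof (intro set_eqI iffI)
    fix x assume "x \<in> convex hull V"
    then have "\<exists>u. (\<forall>x\<in>V. 0 \<le> u x) \<and> sum u V = 1 \<and> sum (\<lambda>x. u x *\<^sub>R x) V = x"
      unfolding ch by (rule CollectD)
    then obtain u where u: "\<forall>v\<in>V. 0 \<le> u v" "sum u V = 1" "(\<Sum>v\<in>V. u v *\<^sub>R v) = x"
      by blast
    have "bary V R x = (if R \<in> V then u R else 0)" for R
    proof -
      have "bary V R (\<Sum>v\<in>V. u v *\<^sub>R v) = (if R \<in> V then u R else 0)"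
        by (rule bary_subset_comb[OF assms subset_refl u(2)])
      then show ?thesis unfolding u(3) .
    qed
    then have "\<forall>R\<in>V. 0 \<le> bary V R x" using u(1) by simp
    then show "x \<in> {x. \<forall>R\<in>V. 0 \<le> bary V R x}" by (rule CollectI)
  next
    fix x assume "x \<in> {x. \<forall>R\<in>V. 0 \<le> bary V R x}"
    then have "\<forall>v\<in>V. 0 \<le> bary V v x" by (rule CollectD)
    moreover have "sum (\<lambda>v. bary V v x) V = 1" "(\<Sum>v\<in>V. bary V v x *\<^sub>R v) = x"
      using bary_props[OF assms, of x] by auto
    ultimately have "\<exists>u. (\<forall>v\<in>V. 0 \<le> u v) \<and> sum u V = 1 \<and> (\<Sum>v\<in>V. u v *\<^sub>R v) = x"
      by (intro exI[of _ "\<lambda>v. bary V v x"]) simp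
    then show "x \<in> convex hull V" unfolding ch by (rule CollectI)
  qed
qed

lemma bary_linear_part:
  assumes "is_simplex (V::'a::euclidean_space set)"
  shows "linear (\<lambda>x. bary V R x - bary V R 0)"
proof (rule linearI)
  fix c and x :: 'a
  have "bary V R (c *\<^sub>R x + (1 - c) *\<^sub>R 0) = c * bary V R x + (1 - c) * bary V R 0"
    by (rule bary_comb2[OF assms]) simp
  then have "bary V R (c *\<^sub>R x) = c * bary V R x + (1 - c) * bary V R 0" by simp
  then show "bary V R (c *\<^sub>R x) - bary V R 0 = c *\<^sub>R (bary V R x - bary V R 0)"
    by (simp only: real_scaleR_def) argo
next
  fix x y :: 'a
  define p where "p = (1/2) *\<^sub>R x + (1/2) *\<^sub>R y"
  have h: "bary V R p = (1/2) * bary V R x + (1/2) * bary V R y"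
    unfolding p_def by (rule bary_comb2[OF assms]) simp
  have h2: "bary V R (2 *\<^sub>R p + (-1) *\<^sub>R 0) = 2 * bary V R p + (-1) * bary V R 0"
    by (rule bary_comb2[OF assms]) simp
  have "2 *\<^sub>R p + (-1) *\<^sub>R (0::'a) = x + y"
    by (simp add: p_def scaleR_add_right)
  then have "bary V R (x + y) = 2 * bary V R p - bary V R 0" using h2 by simp
  then show "bary V R (x + y) - bary V R 0 = bary V R x - bary V R 0 + (bary V R y - bary V R 0)"
    using h by linarith
qed

lemma bary_repr:
  assumes "is_simplex (V::'a::euclidean_space set)"
  shows "\<exists>a b. \<forall>x. bary V R x = a \<bullet> x + b"
proof -
  let ?L = "\<lambda>x. bary V R x - bary V R 0"
  have lin: "linear ?L" by (rule bary_linear_part[OF assms])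
  define a where "a = (\<Sum>i\<in>Basis. ?L i *\<^sub>R i)"
  have "?L x = a \<bullet> x" for x
  proof -
    have "?L x = ?L (\<Sum>i\<in>Basis. (x \<bullet> i) *\<^sub>R i)" by (simp add: euclidean_representation)
    also have "\<dots> = (\<Sum>i\<in>Basis. (x \<bullet> i) * ?L i)"
      by (simp add: linear_sum[OF lin] linear_scale[OF lin])
    also have "\<dots> = (\<Sum>i\<in>Basis. ?L i * (i \<bullet> x))"
      by (rule sum.cong) (simp_all add: inner_commute)
    also have "\<dots> = a \<bullet> x" by (simp add: a_def inner_sum_left)
    finally show ?thesis .
  qed
  then have "\<forall>x. bary V R x = a \<bullet> x + bary V R 0" by (metis diff_eq_eq add.commute)
  then show ?thesis by blast
qed

lemma bary_continuous:
  assumes "is_simplex (V::'a::euclidean_space set)"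
  shows "continuous_on S (bary V R)"
proof -
  obtain a b where ab: "\<forall>x. bary V R x = a \<bullet> x + b" using bary_repr[OF assms] by blast
  have "bary V R = (\<lambda>x. a \<bullet> x + b)" using ab by auto
  then show ?thesis by (simp add: continuous_intros)
qed

lemma bary_borel:
  assumes "is_simplex (V::'a::euclidean_space set)"
  shows "bary V R \<in> borel_measurable borel"
  using bary_continuous[OF assms] borel_measurable_continuous_onI by blast

lemma negligible_tie:
  assumes "is_simplex (V::'a::euclidean_space set)" "P \<in> V" "Q \<in> V" "P \<noteq> Q"
  shows "negligible {x. bary V P x = bary V Q x}"
proof -
  obtain a b where ab: "\<forall>x. bary V P x = a \<bullet> x + b" using bary_repr[OF assms(1)] by blast
  obtain a' b' where ab': "\<forall>x. bary V Q x = a' \<bullet> x + b'" using bary_repr[OF assms(1)] by blast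
  have "a - a' \<noteq> 0"
  proof
    assume "a - a' = 0"
    then have aa: "a = a'" by simp
    have "bary V P P - bary V Q P = 1" "bary V P Q - bary V Q Q = -1"
      using bary_vertex[OF assms(1)] assms by auto
    then show False using ab ab' aa by auto
  qed
  moreover have "{x. bary V P x = bary V Q x} = {x. (a - a') \<bullet> x = b' - b}"
    using ab ab' by (auto simp: inner_diff_left)
  ultimately show ?thesis using negligible_hyperplane by metis
qed


lemma lborel_homothety_emeasure:
  fixes t :: "'a::euclidean_space"
  assumes "r > 0" "A \<in> sets borel"
  shows "emeasure lborel A = ennreal (r ^ DIM('a)) * emeasure lborel ((\<lambda>x. t + r *\<^sub>R x) -` A)"
proof -
  have "emeasure lborel A = emeasure (density (distr lborel borel (\<lambda>x. t + r *\<^sub>R x)) (\<lambda>_. \<bar>r\<bar>^DIM('a))) A"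
    using lborel_affine[of r t] assms by simp
  also have "\<dots> = ennreal (r ^ DIM('a)) * emeasure lborel ((\<lambda>x. t + r *\<^sub>R x) -` A)"
    using assms by (simp add: emeasure_density nn_integral_cmult_indicator emeasure_distr)
  finally show ?thesis .
qed

lemma lborel_homothety_integral:
  fixes t :: "'a::euclidean_space" and f :: "'a \<Rightarrow> real"
  assumes "r > 0" "f \<in> borel_measurable borel"
  shows "(\<integral>x. f x \<partial>lborel) = r ^ DIM('a) * (\<integral>y. f (t + r *\<^sub>R y) \<partial>lborel)"
proof -
  have "(\<integral>x. f x \<partial>lborel) = (\<integral>x. f x \<partial>(density (distr lborel borel (\<lambda>x. t + r *\<^sub>R x)) (\<lambda>_. \<bar>r\<bar>^DIM('a))))"
    using lborel_affine[of r t] assms by simp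
  also have "\<dots> = (\<integral>x. r ^ DIM('a) * f x \<partial>(distr lborel borel (\<lambda>x. t + r *\<^sub>R x)))"
    using assms by (subst integral_density) auto
  also have "\<dots> = (\<integral>y. r ^ DIM('a) * f (t + r *\<^sub>R y) \<partial>lborel)"
    using assms by (subst integral_distr) auto
  also have "\<dots> = r ^ DIM('a) * (\<integral>y. f (t + r *\<^sub>R y) \<partial>lborel)" by simp
  finally show ?thesis .
qed

definition orth :: "'a::euclidean_space set \<Rightarrow> ('a \<Rightarrow> real) \<Rightarrow> 'a set" where
  "orth V c = {x. \<forall>R\<in>V. c R \<le> bary V R x}"

lemma closed_orth:
  assumes "is_simplex (V::'a::euclidean_space set)"
  shows "closed (orth V c)"
proof -
  have "orth V c = (\<Inter>R\<in>V. {x. c R \<le> bary V R x})" by (auto simp: orth_def)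
  moreover have "closed {x. c R \<le> bary V R x}" for R
    by (rule closed_Collect_le) (auto intro: continuous_intros bary_continuous[OF assms])
  ultimately show ?thesis by auto
qed

lemma orth_hom:
  assumes V: "is_simplex (V::'a::euclidean_space set)" and c0: "\<forall>v. v \<notin> V \<longrightarrow> c v = 0"
    and s1: "sum c V < 1"
  defines "t \<equiv> (\<Sum>v\<in>V. c v *\<^sub>R v)" and "r \<equiv> 1 - sum c V"
  shows "orth V c = (\<lambda>y. t + r *\<^sub>R y) ` (convex hull V)"
proof -
  have r: "r > 0" using s1 by (simp add: r_def)
  have cr: "sum c V + r = 1" by (simp add: r_def)
  have b: "bary V R (t + r *\<^sub>R y) = c R + r * bary V R y" for R y
    unfolding t_def by (rule bary_affine_comb[OF V c0 cr])
  show ?thesis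
  proof (intro set_eqI iffI)
    fix x assume x: "x \<in> orth V c"
    define y where "y = (1 / r) *\<^sub>R (x - t)"
    have xy: "x = t + r *\<^sub>R y" using r by (simp add: y_def)
    have "0 \<le> bary V R y" if "R \<in> V" for R
    proof -
      have "c R \<le> bary V R x" using x that by (simp add: orth_def)
      then have "c R \<le> c R + r * bary V R y" using b xy by simp
      then show ?thesis using r by (simp add: zero_le_mult_iff)
    qed
    then have "y \<in> convex hull V" unfolding hull_bary[OF V] by simp
    then show "x \<in> (\<lambda>y. t + r *\<^sub>R y) ` (convex hull V)" using xy by blast
  next
    fix x assume "x \<in> (\<lambda>y. t + r *\<^sub>R y) ` (convex hull V)"
    then obtain y where y: "y \<in> convex hull V" "x = t + r *\<^sub>R y" by blast
    have "c R \<le> bary V R x" if "R \<in> V" for R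
    proof -
      have "0 \<le> bary V R y" using y(1) that unfolding hull_bary[OF V] by simp
      then show ?thesis using b y(2) r by simp
    qed
    then show "x \<in> orth V c" by (simp add: orth_def)
  qed
qed

lemma orth_measure:
  assumes V: "is_simplex (V::'a::euclidean_space set)" and c0: "\<forall>v. v \<notin> V \<longrightarrow> c v = 0"
  shows "emeasure lborel (orth V c) = ennreal ((max 0 (1 - sum c V)) ^ DIM('a)) * emeasure lborel (convex hull V)"
proof (cases "sum c V < 1")
  case True
  define t where "t = (\<Sum>v\<in>V. c v *\<^sub>R v)"
  define r where "r = 1 - sum c V"
  have r: "r > 0" using True by (simp add: r_def)
  have eq: "orth V c = (\<lambda>y. t + r *\<^sub>R y) ` (convex hull V)"
    unfolding t_def r_def by (rule orth_hom[OF V c0 True])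
  have "(\<lambda>x. t + r *\<^sub>R x) -` orth V c = convex hull V"
    unfolding eq using r by auto
  moreover have "orth V c \<in> sets borel" using closed_orth[OF V] by simp
  ultimately have "emeasure lborel (orth V c) = ennreal (r ^ DIM('a)) * emeasure lborel (convex hull V)"
    using lborel_homothety_emeasure[OF r, of "orth V c" t] by simp
  then show ?thesis using r by (simp add: r_def max_def)
next
  case False
  have fin: "finite V" using V simplex_finite by blast
  have "orth V c \<subseteq> {\<Sum>v\<in>V. c v *\<^sub>R v}"
  proof
    fix x assume x: "x \<in> orth V c"
    have le: "\<forall>R\<in>V. c R \<le> bary V R x" using x by (simp add: orth_def)
    have s: "sum (\<lambda>R. bary V R x) V = 1" using bary_props[OF V] by simp
    have "sum c V \<le> sum (\<lambda>R. bary V R x) V" using le by (simp add: sum_mono)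
    then have eqs: "sum (\<lambda>R. bary V R x - c R) V = 0" using s False by (simp add: sum_subtractf)
    have "\<forall>R\<in>V. bary V R x - c R = 0"
      using sum_nonneg_eq_0_iff[OF fin, of "\<lambda>R. bary V R x - c R"] eqs le by simp
    then have "\<And>R. R \<in> V \<Longrightarrow> bary V R x = c R" by simp
    then have "x = (\<Sum>v\<in>V. c v *\<^sub>R v)"
      using bary_props(3)[OF V, of x] by (metis (no_types, lifting) sum.cong)
    then show "x \<in> {\<Sum>v\<in>V. c v *\<^sub>R v}" by simp
  qed
  then have "emeasure lborel (orth V c) = 0"
    by (metis emeasure_lborel_countable countable_finite finite.emptyI finite_insert finite_subset)
  then show ?thesis using False by (simp add: max_def)
qed


definition permap :: "'a::euclidean_space set \<Rightarrow> ('a \<Rightarrow> 'a) \<Rightarrow> 'a \<Rightarrow> 'a" where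
  "permap V p x = (\<Sum>Q\<in>V. bary V (p Q) x *\<^sub>R Q)"

definition invol :: "'a set \<Rightarrow> ('a \<Rightarrow> 'a) \<Rightarrow> bool" where
  "invol V p \<longleftrightarrow> (\<forall>Q\<in>V. p Q \<in> V \<and> p (p Q) = Q)"

lemma invol_bij: "invol V p \<Longrightarrow> bij_betw p V V"
  unfolding invol_def by (rule bij_betw_byWitness[of _ p]) auto

lemma invol_sum: "invol V p \<Longrightarrow> (\<Sum>Q\<in>V. f (p Q)) = (\<Sum>Q\<in>V. f Q)"
  using sum.reindex_bij_betw[OF invol_bij] by blast

lemma permap_bary:
  assumes V: "is_simplex (V::'a::euclidean_space set)" and p: "invol V p" and Q: "Q \<in> V"
  shows "bary V Q (permap V p x) = bary V (p Q) x"
proof -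
  have "sum (\<lambda>Q. bary V (p Q) x) V = 1"
    using invol_sum[OF p, of "\<lambda>Q. bary V Q x"] bary_props(2)[OF V] by simp
  from bary_subset_comb[OF V subset_refl this, of Q] Q show ?thesis
    by (simp add: permap_def)
qed

lemma permap_continuous: "is_simplex V \<Longrightarrow> continuous_on S (permap V p)"
  unfolding permap_def
  by (intro continuous_intros) (auto intro: bary_continuous)

lemma permap_orth:
  assumes V: "is_simplex (V::'a::euclidean_space set)" and p: "invol V p"
  shows "permap V p -` orth V c = orth V (\<lambda>Q. c (p Q))"
proof -
  have "(\<forall>R\<in>V. c R \<le> bary V (p R) x) \<longleftrightarrow> (\<forall>Q\<in>V. c (p Q) \<le> bary V Q x)" for x
    using p unfolding invol_def by metis
  then show ?thesis
    by (auto simp: orth_def permap_bary[OF V p])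
qed

lemma orth_Un_UNIV:
  assumes V: "is_simplex (V::'a::euclidean_space set)"
  shows "\<exists>n::nat. \<forall>Q\<in>V. - real n \<le> bary V Q x"
proof -
  have fin: "finite V" using V simplex_finite by blast
  obtain n :: nat where n: "(\<Sum>Q\<in>V. \<bar>bary V Q x\<bar>) \<le> real n" using real_arch_simple by blast
  have "- real n \<le> bary V Q x" if "Q \<in> V" for Q
  proof -
    have "\<bar>bary V Q x\<bar> \<le> (\<Sum>Q\<in>V. \<bar>bary V Q x\<bar>)"
      by (rule member_le_sum[OF that _ fin]) simp
    then show ?thesis using n by linarith
  qed
  then show ?thesis by blast
qed

lemma borel_orth:
  assumes V: "is_simplex (V::'a::euclidean_space set)"
  shows "borel = sigma UNIV (range (orth V))"
proof (rule borel_eq_sigmaI1[OF borel_eq_halfspace_ge])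
  show "orth V c \<in> sets borel" for c using closed_orth[OF V] by simp
next
  fix X assume X: "X \<in> (\<lambda>(a, i). {x::'a. a \<le> x \<bullet> i}) ` (UNIV \<times> Basis)"
  then obtain a i where X: "X = {x::'a. a \<le> x \<bullet> i}" by auto
  let ?M = "sigma UNIV (range (orth V))"
  have spM: "space ?M = UNIV" by simp
  have meas: "bary V R \<in> borel_measurable ?M" if R: "R \<in> V" for R
  proof (rule borel_measurableI_ge)
    fix y
    have "{x \<in> space ?M. y \<le> bary V R x} = (\<Union>n. orth V (\<lambda>Q. if Q = R then y else - real n))"
    proof (intro set_eqI iffI)
      fix x assume x: "x \<in> {x \<in> space ?M. y \<le> bary V R x}"
      obtain n :: nat where n: "\<forall>Q\<in>V. - real n \<le> bary V Q x" using orth_Un_UNIV[OF V] by blast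
      have "x \<in> orth V (\<lambda>Q. if Q = R then y else - real n)"
        using x n by (auto simp: orth_def)
      then show "x \<in> (\<Union>n. orth V (\<lambda>Q. if Q = R then y else - real n))" by blast
    next
      fix x assume "x \<in> (\<Union>n. orth V (\<lambda>Q. if Q = R then y else - real n))"
      then obtain n where "x \<in> orth V (\<lambda>Q. if Q = R then y else - real n)" by blast
      then have "y \<le> bary V R x" using R by (auto simp: orth_def)
      then show "x \<in> {x \<in> space ?M. y \<le> bary V R x}" by auto
    qed
    also have "\<dots> \<in> sets ?M" by (intro sets.countable_UN) auto
    finally show "{x \<in> space ?M. y \<le> bary V R x} \<in> sets ?M" .
  qed
  have fin: "finite V" using V simplex_finite by blast
  have eqi: "(\<lambda>x::'a. x \<bullet> i) = (\<lambda>x. \<Sum>R\<in>V. bary V R x * (R \<bullet> i))"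
  proof
    fix x :: 'a
    have "x \<bullet> i = (\<Sum>R\<in>V. bary V R x *\<^sub>R R) \<bullet> i" using bary_props(3)[OF V, of x] by simp
    also have "\<dots> = (\<Sum>R\<in>V. bary V R x * (R \<bullet> i))" by (simp add: inner_sum_left)
    finally show "x \<bullet> i = (\<Sum>R\<in>V. bary V R x * (R \<bullet> i))" .
  qed
  have "(\<lambda>x::'a. x \<bullet> i) \<in> borel_measurable ?M"
    unfolding eqi by (intro borel_measurable_sum borel_measurable_times meas) auto
  then have "{x \<in> space ?M. a \<le> x \<bullet> i} \<in> sets ?M" unfolding borel_measurable_iff_ge by blast
  then show "X \<in> sets ?M" using X by simp
qed

definition NK :: "'a::euclidean_space set \<Rightarrow> 'a measure" where
  "NK V = density lborel (\<lambda>x. ennreal (indicator (convex hull V) x))"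

lemma hull_borel: "is_simplex V \<Longrightarrow> convex hull V \<in> sets borel"
  by (simp add: compact_imp_closed compact_convex_hull simplex_finite finite_imp_compact)

lemma NK_orth:
  assumes V: "is_simplex (V::'a::euclidean_space set)"
  shows "emeasure (NK V) (orth V c) =
    ennreal ((max 0 (1 - (\<Sum>R\<in>V. max (c R) 0))) ^ DIM('a)) * emeasure lborel (convex hull V)"
proof -
  define c' where "c' = (\<lambda>R. if R \<in> V then max (c R) 0 else 0)"
  have hb: "convex hull V \<in> sets borel" by (rule hull_borel[OF V])
  have ob: "orth V c \<in> sets borel" using closed_orth[OF V] by simp
  have "emeasure (NK V) (orth V c) = (\<integral>\<^sup>+ x. ennreal (indicator (convex hull V) x) * indicator (orth V c) x \<partial>lborel)"
    unfolding NK_def using hb ob by (subst emeasure_density) auto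
  also have "\<dots> = (\<integral>\<^sup>+ x. indicator (convex hull V \<inter> orth V c) x \<partial>lborel)"
    by (rule nn_integral_cong) (auto split: split_indicator)
  also have "\<dots> = emeasure lborel (convex hull V \<inter> orth V c)"
    using hb ob by (simp add: nn_integral_indicator)
  also have "convex hull V \<inter> orth V c = orth V c'"
    unfolding hull_bary[OF V] by (auto simp: orth_def c'_def)
  also have "emeasure lborel (orth V c') = ennreal ((max 0 (1 - sum c' V)) ^ DIM('a)) * emeasure lborel (convex hull V)"
    by (rule orth_measure[OF V]) (simp add: c'_def)
  also have "sum c' V = (\<Sum>R\<in>V. max (c R) 0)" by (rule sum.cong) (auto simp: c'_def)
  finally show ?thesis .
qed

lemma NK_sets: "sets (NK V) = sets borel"
  by (simp add: NK_def)

lemma sym_measure: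
  assumes V: "is_simplex (V::'a::euclidean_space set)" and p: "invol V p"
  shows "distr (NK V) borel (permap V p) = NK V"
proof -
  have gm: "permap V p \<in> measurable (NK V) borel"
    unfolding NK_def using permap_continuous[OF V] by (simp add: borel_measurable_continuous_onI)
  have fK: "emeasure lborel (convex hull V) < \<infinity>"
    using emeasure_compact_finite[OF compact_convex_hull[OF finite_imp_compact[OF simplex_finite[OF V]]]] .
  have "NK V = distr (NK V) borel (permap V p)"
  proof (rule measure_eqI_generator_eq[where E="range (orth V)" and \<Omega>=UNIV
        and A="\<lambda>i. orth V (\<lambda>_. - real i)"])
    show "Int_stable (range (orth V))"
    proof (rule Int_stableI)
      fix a b assume "a \<in> range (orth V)" "b \<in> range (orth V)"
      then obtain c c' where "a = orth V c" "b = orth V c'" by blast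
      moreover have "orth V c \<inter> orth V c' = orth V (\<lambda>R. max (c R) (c' R))"
        by (auto simp: orth_def)
      ultimately show "a \<inter> b \<in> range (orth V)" by blast
    qed
    show "range (orth V) \<subseteq> Pow UNIV" by simp
    have sb: "sets borel = sigma_sets UNIV (range (orth V))"
      by (subst borel_orth[OF V]) simp
    show "sets (NK V) = sigma_sets UNIV (range (orth V))" using sb NK_sets by metis
    show "sets (distr (NK V) borel (permap V p)) = sigma_sets UNIV (range (orth V))" using sb by simp
    show "range (\<lambda>i. orth V (\<lambda>_. - real i)) \<subseteq> range (orth V)" by auto
    show "(\<Union>i. orth V (\<lambda>_. - real i)) = UNIV"
    proof -
      have "x \<in> (\<Union>i. orth V (\<lambda>_. - real i))" for x
        using orth_Un_UNIV[OF V, of x] by (auto simp: orth_def)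
      then show ?thesis by blast
    qed
    show "emeasure (NK V) (orth V (\<lambda>_. - real i)) \<noteq> \<infinity>" for i
      using fK by (simp add: NK_orth[OF V] ennreal_mult_eq_top_iff)
    fix X assume "X \<in> range (orth V)"
    then obtain c where X: "X = orth V c" by blast
    have "emeasure (distr (NK V) borel (permap V p)) X = emeasure (NK V) (permap V p -` X \<inter> space (NK V))"
      using X closed_orth[OF V] gm by (subst emeasure_distr) auto
    also have "\<dots> = emeasure (NK V) (orth V (\<lambda>Q. c (p Q)))"
      using X permap_orth[OF V p] by (simp add: NK_def)
    also have "\<dots> = emeasure (NK V) X"
      unfolding X NK_orth[OF V] using invol_sum[OF p, of "\<lambda>R. max (c R) 0"] by simp
    finally show "emeasure (NK V) X = emeasure (distr (NK V) borel (permap V p)) X" by simp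
  qed
  then show ?thesis by simp
qed

lemma sym_integral:
  assumes V: "is_simplex (V::'a::euclidean_space set)" and p: "invol V p"
    and F: "(F :: 'a \<Rightarrow> real) \<in> borel_measurable borel"
  shows "(\<integral>x. indicator (convex hull V) x * F (permap V p x) \<partial>lborel)
       = (\<integral>x. indicator (convex hull V) x * F x \<partial>lborel)"
proof -
  have hb: "convex hull V \<in> sets borel" by (rule hull_borel[OF V])
  have gm: "permap V p \<in> borel_measurable borel"
    using permap_continuous[OF V] by (simp add: borel_measurable_continuous_onI)
  have I: "integral\<^sup>L (NK V) G = (\<integral>x. indicator (convex hull V) x * G x \<partial>lborel)"
    if "G \<in> borel_measurable borel" for G :: "'a \<Rightarrow> real"
    unfolding NK_def using that hb by (subst integral_density) auto
  have "(\<integral>x. indicator (convex hull V) x * F (permap V p x) \<partial>lborel) = integral\<^sup>L (NK V) (\<lambda>x. F (permap V p x))"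
    using I[of "\<lambda>x. F (permap V p x)"] F gm by (simp add: measurable_compose)
  also have "\<dots> = integral\<^sup>L (distr (NK V) borel (permap V p)) F"
    using F gm by (subst integral_distr) (auto simp: NK_def)
  also have "\<dots> = integral\<^sup>L (NK V) F" using sym_measure[OF V p] by simp
  also have "\<dots> = (\<integral>x. indicator (convex hull V) x * F x \<partial>lborel)" using I[OF F] .
  finally show ?thesis .
qed


definition msim :: "'a::euclidean_space set \<Rightarrow> 'a set \<Rightarrow> 'a \<Rightarrow> real" where
  "msim V S x = Min ((\<lambda>R. bary V R x) ` S)"

lemma continuous_on_Min_img:
  fixes f :: "'r \<Rightarrow> 'x::topological_space \<Rightarrow> real"
  assumes "finite S" "S \<noteq> {}" "\<And>R. R \<in> S \<Longrightarrow> continuous_on U (f R)"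
  shows "continuous_on U (\<lambda>x. Min ((\<lambda>R. f R x) ` S))"
  using assms
proof (induction S rule: finite_ne_induct)
  case (singleton a)
  then show ?case by simp
next
  case (insert a A)
  have eq: "(\<lambda>x. Min ((\<lambda>R. f R x) ` insert a A)) = (\<lambda>x. min (f a x) (Min ((\<lambda>R. f R x) ` A)))"
    using insert.hyps by (simp add: Min_insert)
  show ?case unfolding eq by (rule continuous_on_min) (use insert in auto)
qed

lemma msim_continuous:
  assumes V: "is_simplex V" and S: "S \<subseteq> V" "S \<noteq> {}"
  shows "continuous_on U (msim V S)"
proof -
  have "finite S" using S V simplex_finite finite_subset by blast
  then show ?thesis unfolding msim_def
    by (rule continuous_on_Min_img[OF _ S(2)]) (rule bary_continuous[OF V])
qed

lemma compact_hull: "is_simplex V \<Longrightarrow> compact (convex hull V)"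
  by (simp add: compact_convex_hull simplex_finite finite_imp_compact)

lemma fin_hull: "is_simplex V \<Longrightarrow> emeasure lborel (convex hull V) < \<infinity>"
  using emeasure_compact_finite[OF compact_hull] .

lemma int_cont:
  assumes "compact A" "continuous_on A f"
  shows "integrable lborel (\<lambda>x. indicator A x * (f x :: real))"
  using borel_integrable_compact[OF assms] by simp

lemma msim_hom:
  fixes f g :: "'x \<Rightarrow> real"
  assumes "finite S" "S \<noteq> {}" "r \<ge> 0" "\<And>R. R \<in> S \<Longrightarrow> g R = t + r * f R"
  shows "Min (g ` S) = t + r * Min (f ` S)"
proof -
  have m: "mono (\<lambda>z::real. t + r * z)" using assms(3) by (auto intro!: monoI mult_left_mono)
  have "t + r * Min (f ` S) = Min ((\<lambda>z. t + r * z) ` f ` S)"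
    by (rule mono_Min_commute[OF m]) (use assms in auto)
  also have "(\<lambda>z. t + r * z) ` f ` S = g ` S" using assms(4) by (auto simp: image_image)
  finally show ?thesis by simp
qed

lemma min_integral_bounds:
  assumes V: "is_simplex (V::'a::euclidean_space set)" and S: "S \<subseteq> V" "S \<noteq> {}"
    and r: "0 < r" "r < 1"
  defines "Ic \<equiv> (\<integral>x. indicator (convex hull V) x * msim V S x \<partial>lborel)"
    and "mK \<equiv> measure lborel (convex hull V)"
    and "t \<equiv> (1 - r) / real (card S)"
  shows "0 \<le> Ic - r ^ DIM('a) * (t * mK + r * Ic) \<and> Ic - r ^ DIM('a) * (t * mK + r * Ic) \<le> t * (mK - r ^ DIM('a) * mK)"
proof -
  let ?K = "convex hull V"
  let ?d = "DIM('a)"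
  have fin: "finite V" using V simplex_finite by blast
  have finS: "finite S" using S fin finite_subset by blast
  have kpos: "card S > 0" using finS S by (simp add: card_gt_0_iff)
  have t: "t > 0" using r kpos by (simp add: t_def)
  define c where "c = (\<lambda>R. if R \<in> S then t else 0)"
  have c0: "\<forall>v. v \<notin> V \<longrightarrow> c v = 0" using S by (auto simp: c_def)
  have sumc: "sum c V = 1 - r"
  proof -
    have "sum c V = (\<Sum>R\<in>V. if R \<in> S then t else 0)" by (simp add: c_def)
    also have "\<dots> = (\<Sum>R\<in>V \<inter> S. t)" by (rule sum.inter_restrict[OF fin, symmetric])
    also have "V \<inter> S = S" using S by blast
    finally show ?thesis using kpos by (simp add: t_def)
  qed
  define T where "T = (\<Sum>v\<in>V. c v *\<^sub>R v)"
  define Ob where "Ob = orth V c"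
  have cr: "sum c V + r = 1" using sumc by simp
  have bh: "bary V R (T + r *\<^sub>R y) = c R + r * bary V R y" for R y
    unfolding T_def by (rule bary_affine_comb[OF V c0 cr])
  have Osub: "Ob \<subseteq> ?K"
  proof
    fix x assume "x \<in> Ob"
    then have "\<forall>R\<in>V. c R \<le> bary V R x" by (simp add: Ob_def orth_def)
    moreover have "\<forall>R. 0 \<le> c R" using t by (simp add: c_def)
    ultimately have "\<forall>R\<in>V. 0 \<le> bary V R x" by (meson order_trans)
    then show "x \<in> ?K" unfolding hull_bary[OF V] by simp
  qed
  have Ocomp: "compact Ob"
    using Osub closed_orth[OF V] compact_hull[OF V] unfolding Ob_def by (metis compact_Int_closed inf.absorb_iff2)
  have Kcomp: "compact ?K" by (rule compact_hull[OF V])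
  have mcont: "continuous_on U (msim V S)" for U by (rule msim_continuous[OF V S])
  have intK: "integrable lborel (\<lambda>x. indicator ?K x * msim V S x)" by (rule int_cont[OF Kcomp mcont])
  have intO: "integrable lborel (\<lambda>x. indicator Ob x * msim V S x)" by (rule int_cont[OF Ocomp mcont])
  have intK1: "integrable lborel (\<lambda>x. indicator ?K x :: real)"
    using int_cont[OF Kcomp continuous_on_const[of _ 1]] by simp
  have mO: "measure lborel Ob = r ^ ?d * mK"
  proof -
    have "emeasure lborel Ob = ennreal (r ^ ?d) * emeasure lborel ?K"
      unfolding Ob_def using orth_measure[OF V c0] sumc r by (simp add: max_def)
    then show ?thesis unfolding mK_def measure_def using r by (simp add: enn2real_mult)
  qed
  have hO: "indicator Ob (T + r *\<^sub>R y) = (indicator ?K y :: real)" for y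
  proof -
    have "(T + r *\<^sub>R y \<in> Ob) \<longleftrightarrow> y \<in> ?K"
      unfolding Ob_def orth_def hull_bary[OF V] using bh r by (simp add: zero_le_mult_iff)
    then show ?thesis by (simp add: indicator_def)
  qed
  have hm: "msim V S (T + r *\<^sub>R y) = t + r * msim V S y" for y
    unfolding msim_def by (rule msim_hom[OF finS S(2)]) (use r S in \<open>auto simp: bh c_def\<close>)
  have IO: "(\<integral>x. indicator Ob x * msim V S x \<partial>lborel) = r ^ ?d * (t * mK + r * Ic)"
  proof -
    have bm: "(\<lambda>x. indicator Ob x * msim V S x) \<in> borel_measurable borel"
      using Ocomp mcont by (intro borel_measurable_times borel_measurable_indicator borel_measurable_continuous_onI)
        (auto simp: compact_imp_closed)
    have "(\<integral>x. indicator Ob x * msim V S x \<partial>lborel) = r ^ ?d * (\<integral>y. indicator Ob (T + r *\<^sub>R y) * msim V S (T + r *\<^sub>R y) \<partial>lborel)"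
      by (rule lborel_homothety_integral[OF r(1) bm])
    also have "(\<integral>y. indicator Ob (T + r *\<^sub>R y) * msim V S (T + r *\<^sub>R y) \<partial>lborel)
        = (\<integral>y. t * indicator ?K y + r * (indicator ?K y * msim V S y) \<partial>lborel)"
      by (rule Bochner_Integration.integral_cong) (auto simp: hO hm algebra_simps)
    also have "\<dots> = t * mK + r * Ic"
      using intK intK1 Kcomp by (simp add: Ic_def mK_def compact_imp_closed borel_closed)
    finally show ?thesis .
  qed
  have D: "Ic - (\<integral>x. indicator Ob x * msim V S x \<partial>lborel) = (\<integral>x. indicator (?K - Ob) x * msim V S x \<partial>lborel)"
  proof -
    have "Ic - (\<integral>x. indicator Ob x * msim V S x \<partial>lborel) = (\<integral>x. indicator ?K x * msim V S x - indicator Ob x * msim V S x \<partial>lborel)"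
      unfolding Ic_def using intK intO by simp
    also have "\<dots> = (\<integral>x. indicator (?K - Ob) x * msim V S x \<partial>lborel)"
      by (rule Bochner_Integration.integral_cong) (use Osub in \<open>auto split: split_indicator\<close>)
    finally show ?thesis .
  qed
  have intD: "integrable lborel (\<lambda>x. indicator (?K - Ob) x * msim V S x)"
  proof -
    have "integrable lborel (\<lambda>x. indicator ?K x * msim V S x - indicator Ob x * msim V S x)"
      using intK intO by simp
    moreover have "(\<lambda>x. indicator ?K x * msim V S x - indicator Ob x * msim V S x) = (\<lambda>x. indicator (?K - Ob) x * msim V S x)"
      using Osub by (intro ext) (auto split: split_indicator)
    ultimately show ?thesis by simp
  qed
  have KOb: "?K - Ob \<in> sets borel" using Kcomp Ocomp by (simp add: compact_imp_closed borel_closed sets.Diff)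
  have finKO: "emeasure lborel (?K - Ob) < \<infinity>"
  proof -
    have "emeasure lborel (?K - Ob) \<le> emeasure lborel ?K"
      by (rule emeasure_mono) (use hull_borel[OF V] in auto)
    then show ?thesis using fin_hull[OF V] by (rule le_less_trans)
  qed
  have intKO: "integrable lborel (\<lambda>x. t * indicator (?K - Ob) x :: real)"
    using KOb finKO by (simp add: integrable_real_indicator)
  have pw: "0 \<le> indicator (?K - Ob) x * msim V S x \<and> indicator (?K - Ob) x * msim V S x \<le> t * indicator (?K - Ob) x" for x
  proof (cases "x \<in> ?K - Ob")
    case True
    then have xK: "\<forall>R\<in>V. 0 \<le> bary V R x" using hull_bary[OF V] by auto
    have m0: "0 \<le> msim V S x" unfolding msim_def using finS S xK by (auto simp: Min_ge_iff)
    from True obtain R where R: "R \<in> V" "bary V R x < c R" unfolding Ob_def orth_def by auto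
    then have "R \<in> S" using xK c_def by (metis not_le)
    then have "msim V S x \<le> bary V R x" unfolding msim_def using finS by auto
    then have "msim V S x \<le> t" using R \<open>R \<in> S\<close> by (simp add: c_def)
    then show ?thesis using True m0 by simp
  qed simp
  have lo: "0 \<le> (\<integral>x. indicator (?K - Ob) x * msim V S x \<partial>lborel)"
    using pw by (simp add: Bochner_Integration.integral_nonneg)
  have hi: "(\<integral>x. indicator (?K - Ob) x * msim V S x \<partial>lborel) \<le> (\<integral>x. t * indicator (?K - Ob) x \<partial>lborel)"
    by (rule integral_mono[OF intD intKO]) (use pw in blast)
  have mKO: "(\<integral>x. t * indicator (?K - Ob) x \<partial>lborel) = t * (mK - r ^ ?d * mK)"
  proof -
    have "(\<integral>x. t * indicator (?K - Ob) x \<partial>lborel) = t * measure lborel (?K - Ob)" by simp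
    also have "measure lborel (?K - Ob) = mK - measure lborel Ob"
      unfolding mK_def using Osub Ocomp fin_hull[OF V] hull_borel[OF V]
      by (subst measure_Diff) (auto simp: compact_imp_closed borel_closed)
    finally show ?thesis using mO by simp
  qed
  show ?thesis using D lo hi mKO IO by linarith
qed


lemma min_integral:
  assumes V: "is_simplex (V::'a::euclidean_space set)" and S: "S \<subseteq> V" "S \<noteq> {}"
  shows "(\<integral>x. indicator (convex hull V) x * msim V S x \<partial>lborel)
     = measure lborel (convex hull V) / (real (card S) * (real DIM('a) + 1))"
proof -
  define Ic where "Ic = (\<integral>x. indicator (convex hull V) x * msim V S x \<partial>lborel)"
  define mK where "mK = measure lborel (convex hull V)"
  define k where "k = real (card S)"
  define d where "d = DIM('a)"
  have fin: "finite V" using V simplex_finite by blast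
  have finS: "finite S" using S fin finite_subset by blast
  have kpos: "k > 0" using finS S by (simp add: k_def card_gt_0_iff)
  define G where "G = (\<lambda>r::real. Ic * k * (\<Sum>j<Suc d. r ^ j))"
  have bnd: "r ^ d * mK \<le> G r \<and> G r \<le> mK" if r: "0 < r" "r < 1" for r
  proof -
    define t where "t = (1 - r) / k"
    have t: "t > 0" using r kpos by (simp add: t_def)
    have tk: "t * k = 1 - r" using kpos by (simp add: t_def)
    define s where "s = (\<Sum>j<Suc d. r ^ j)"
    have b: "0 \<le> Ic - r ^ d * (t * mK + r * Ic) \<and> Ic - r ^ d * (t * mK + r * Ic) \<le> t * (mK - r ^ d * mK)"
      using min_integral_bounds[OF V S r] unfolding Ic_def mK_def t_def k_def d_def by simp
    have pw: "1 - r ^ Suc d = (1 - r) * s" unfolding s_def by (rule one_diff_power_eq)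
    have e: "Ic - r ^ d * (t * mK + r * Ic) = t * (Ic * k * s - r ^ d * mK)"
    proof -
      have "Ic - r ^ d * (t * mK + r * Ic) = Ic * (1 - r ^ Suc d) - t * (r ^ d * mK)"
        by (simp add: algebra_simps)
      also have "\<dots> = Ic * (t * k * s) - t * (r ^ d * mK)" using pw tk by simp
      also have "\<dots> = t * (Ic * k * s - r ^ d * mK)" by (simp add: algebra_simps)
      finally show ?thesis .
    qed
    have l: "0 \<le> Ic * k * s - r ^ d * mK" using b e t by (simp add: zero_le_mult_iff)
    have "t * (Ic * k * s - r ^ d * mK) \<le> t * (mK - r ^ d * mK)" using b e by simp
    then have u: "Ic * k * s - r ^ d * mK \<le> mK - r ^ d * mK" using t by simp
    show ?thesis using l u by (simp add: G_def s_def)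
  qed
  have F: "at_left (1::real) \<noteq> bot" by (simp add: trivial_limit_at_left_real)
  have ev: "eventually (\<lambda>r. r \<in> {0<..<1}) (at_left (1::real))" by (rule eventually_at_left_real) simp
  have lG: "(G \<longlongrightarrow> Ic * k * real (Suc d)) (at_left 1)"
  proof -
    have "(G \<longlongrightarrow> Ic * k * (\<Sum>j<Suc d. 1 ^ j)) (at_left 1)"
      unfolding G_def by (intro tendsto_intros)
    then show ?thesis by simp
  qed
  have lP: "((\<lambda>r::real. r ^ d * mK) \<longlongrightarrow> 1 ^ d * mK) (at_left 1)" by (intro tendsto_intros)
  have e1: "eventually (\<lambda>r. r ^ d * mK \<le> G r) (at_left 1)"
    using ev by (rule eventually_mono) (use bnd in auto)
  have e2: "eventually (\<lambda>r. G r \<le> mK) (at_left 1)"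
    using ev by (rule eventually_mono) (use bnd in auto)
  have "1 ^ d * mK \<le> Ic * k * real (Suc d)"
    by (rule tendsto_le[OF F lG lP e1])
  then have "mK \<le> Ic * k * real (Suc d)" by simp
  moreover have "Ic * k * real (Suc d) \<le> mK"
    by (rule tendsto_le[OF F tendsto_const lG e2])
  ultimately have eq: "Ic * (k * (real d + 1)) = mK" by (simp add: algebra_simps)
  have pos: "k * (real d + 1) \<noteq> 0" using kpos by simp
  have "Ic = mK / (k * (real d + 1))" using eq pos by (simp add: eq_divide_eq)
  then show ?thesis unfolding Ic_def mK_def k_def d_def .
qed


lemma sum_Pow_insert_ne:
  assumes "finite A" "a \<notin> A"
  shows "(\<Sum>S\<in>Pow (insert a A) - {{}}. g S) = (\<Sum>S\<in>Pow A - {{}}. g S) + (\<Sum>T\<in>Pow A. g (insert a T))"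
proof -
  have eq: "Pow (insert a A) - {{}} = (Pow A - {{}}) \<union> insert a ` Pow A"
    by (auto simp: Pow_insert)
  have disj: "(Pow A - {{}}) \<inter> insert a ` Pow A = {}" using assms by auto
  have inj: "inj_on (insert a) (Pow A)"
    using assms unfolding inj_on_def by (metis Pow_iff insert_ident subset_iff)
  have "(\<Sum>S\<in>Pow (insert a A) - {{}}. g S) = (\<Sum>S\<in>Pow A - {{}}. g S) + (\<Sum>S\<in>insert a ` Pow A. g S)"
    unfolding eq using assms disj by (intro sum.union_disjoint) auto
  also have "(\<Sum>S\<in>insert a ` Pow A. g S) = (\<Sum>T\<in>Pow A. g (insert a T))"
    using sum.reindex[OF inj] by simp
  finally show ?thesis .
qed

lemma sum_Pow_insert:
  assumes "finite A" "a \<notin> A"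
  shows "(\<Sum>S\<in>Pow (insert a A). g S) = (\<Sum>S\<in>Pow A. g S) + (\<Sum>T\<in>Pow A. g (insert a T))"
proof -
  have eq: "Pow (insert a A) = Pow A \<union> insert a ` Pow A"
    by (auto simp: Pow_insert)
  have disj: "Pow A \<inter> insert a ` Pow A = {}" using assms by auto
  have inj: "inj_on (insert a) (Pow A)"
    using assms unfolding inj_on_def by (metis Pow_iff insert_ident subset_iff)
  have "(\<Sum>S\<in>Pow (insert a A). g S) = (\<Sum>S\<in>Pow A. g S) + (\<Sum>S\<in>insert a ` Pow A. g S)"
    unfolding eq using assms disj by (intro sum.union_disjoint) auto
  also have "(\<Sum>S\<in>insert a ` Pow A. g S) = (\<Sum>T\<in>Pow A. g (insert a T))"
    using sum.reindex[OF inj] by simp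
  finally show ?thesis .
qed

lemma sum_Pow_split_empty:
  assumes "finite A"
  shows "(\<Sum>T\<in>Pow A. g T) = g {} + (\<Sum>T\<in>Pow A - {{}}. g T)"
proof -
  have "Pow A = insert {} (Pow A - {{}})" by auto
  then show ?thesis using assms by (metis finite_Pow_iff finite_Diff insert_Diff_single sum.insert_remove)
qed

definition mmsum :: "('a \<Rightarrow> real) \<Rightarrow> 'a set \<Rightarrow> real" where
  "mmsum f A = (\<Sum>S\<in>Pow A - {{}}. (-1) ^ (card S + 1) * Min (f ` S))"

lemma max_min:
  assumes "finite A"
  shows "mmsum f A = (if A = {} then 0 else Max (f ` A))"
  using assms
proof (induction A arbitrary: f rule: finite_induct)
  case empty
  then show ?case by (simp add: mmsum_def)
next
  case (insert a A)
  define g where "g = (\<lambda>x. min (f a) (f x))"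
  have finP: "finite (Pow A)" using insert by simp
  have t: "(-1) ^ (card (insert a T) + 1) * Min (f ` insert a T) = - ((-1) ^ (card T + 1) * Min (g ` T))"
    if "T \<in> Pow A - {{}}" for T
  proof -
    have T: "finite T" "T \<noteq> {}" "a \<notin> T" using that insert finite_subset by auto
    have "Min (f ` insert a T) = min (f a) (Min (f ` T))" using T by (simp add: Min_insert)
    also have "\<dots> = Min (g ` T)"
    proof -
      have mo: "mono (min (f a))" by (rule monoI) (simp add: min.coboundedI2 min_le_iff_disj)
      have "min (f a) (Min (f ` T)) = Min (min (f a) ` f ` T)"
        by (rule mono_Min_commute[OF mo]) (use T in auto)
      then show ?thesis by (simp add: g_def image_image)
    qed
    finally show ?thesis using T by simp
  qed
  have "(\<Sum>T\<in>Pow A. (-1) ^ (card (insert a T) + 1) * Min (f ` insert a T))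
      = f a + (\<Sum>T\<in>Pow A - {{}}. (-1) ^ (card (insert a T) + 1) * Min (f ` insert a T))"
    by (subst sum_Pow_split_empty[OF insert(1)]) simp
  also have "(\<Sum>T\<in>Pow A - {{}}. (-1) ^ (card (insert a T) + 1) * Min (f ` insert a T))
      = (\<Sum>T\<in>Pow A - {{}}. - ((-1) ^ (card T + 1) * Min (g ` T)))"
    by (rule sum.cong[OF refl t])
  also have "\<dots> = - mmsum g A" unfolding mmsum_def by (simp add: sum_negf)
  finally have s2: "(\<Sum>T\<in>Pow A. (-1) ^ (card (insert a T) + 1) * Min (f ` insert a T)) = f a - mmsum g A"
    by simp
  have "mmsum f (insert a A) = mmsum f A + (\<Sum>T\<in>Pow A. (-1) ^ (card (insert a T) + 1) * Min (f ` insert a T))"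
    unfolding mmsum_def by (rule sum_Pow_insert_ne[OF insert(1,2)])
  also have "\<dots> = mmsum f A + (f a - mmsum g A)" by (simp only: s2)
  also have "\<dots> = Max (f ` insert a A)"
  proof (cases "A = {}")
    case True
    then show ?thesis using insert.IH by simp
  next
    case False
    have m: "Max (g ` A) = min (f a) (Max (f ` A))"
    proof -
      have mo: "mono (min (f a))" by (rule monoI) (simp add: min.coboundedI2 min_le_iff_disj)
      have "min (f a) (Max (f ` A)) = Max (min (f a) ` f ` A)"
        by (rule mono_Max_commute[OF mo]) (use False insert(1) in auto)
      then show ?thesis by (simp add: g_def image_image)
    qed
    show ?thesis using insert.IH[of f] insert.IH[of g] False insert(1) m
      by (simp add: Max_insert max_def min_def)
  qed
  finally show ?case by simp
qed

definition bsum :: "real \<Rightarrow> 'a set \<Rightarrow> real" where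
  "bsum j A = (\<Sum>T\<in>Pow A. (-1) ^ card T / (real (card T) + j))"

lemma bsum_closed:
  assumes "finite A" "j > 0"
  shows "bsum j A = fact (card A) / pochhammer j (Suc (card A))"
  using assms
proof (induction A arbitrary: j rule: finite_induct)
  case empty
  then show ?case by (simp add: bsum_def pochhammer_Suc)
next
  case (insert a A)
  define n where "n = card A"
  have c: "card (insert a A) = Suc n" using insert by (simp add: n_def)
  have tr: "(-1) ^ card (insert a T) / (real (card (insert a T)) + j) = - ((-1) ^ card T / (real (card T) + (j + 1)))"
    if "T \<in> Pow A" for T
  proof -
    have T: "finite T" "a \<notin> T" using that insert finite_subset by auto
    then show ?thesis by (simp add: algebra_simps)
  qed
  have "bsum j (insert a A) = bsum j A + (\<Sum>T\<in>Pow A. (-1) ^ card (insert a T) / (real (card (insert a T)) + j))"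
    unfolding bsum_def by (rule sum_Pow_insert[OF insert(1,2)])
  also have "(\<Sum>T\<in>Pow A. (-1) ^ card (insert a T) / (real (card (insert a T)) + j))
      = (\<Sum>T\<in>Pow A. - ((-1) ^ card T / (real (card T) + (j + 1))))"
    by (rule sum.cong) (use tr in auto)
  also have "\<dots> = - bsum (j + 1) A" unfolding bsum_def by (simp add: sum_negf)
  finally have "bsum j (insert a A) = bsum j A - bsum (j + 1) A" by simp
  also have "\<dots> = fact n / pochhammer j (Suc n) - fact n / pochhammer (j + 1) (Suc n)"
    using insert.IH[of j] insert.IH[of "j + 1"] insert.prems by (simp add: n_def)
  also have "\<dots> = fact (Suc n) / pochhammer j (Suc (Suc n))"
  proof -
    define X where "X = pochhammer j (Suc n)"
    define Y where "Y = pochhammer (j + 1) (Suc n)"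
    have X: "X > 0" unfolding X_def using insert.prems by (simp add: pochhammer_pos)
    have Y: "Y > 0" unfolding Y_def using insert.prems by (simp add: pochhammer_pos)
    have Z1: "pochhammer j (Suc (Suc n)) = j * Y" unfolding Y_def by (rule pochhammer_rec)
    have Z2: "pochhammer j (Suc (Suc n)) = (j + real (Suc n)) * X" unfolding X_def by (rule pochhammer_rec')
    define m where "m = j + real (Suc n)"
    have jY: "j * Y = m * X" using Z1 Z2 by (simp add: m_def)
    have jp: "j * Y > 0" using Y insert.prems by simp
    have a1: "fact n / X = fact n * m / (j * Y)"
      using X jp insert.prems by (simp add: frac_eq_eq jY mult.assoc m_def)
    have a2: "fact n / Y = fact n * j / (j * Y)"
      using Y insert.prems by simp
    have "fact n / X - fact n / Y = (fact n * m - fact n * j) / (j * Y)"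
      unfolding a1 a2 by (simp add: diff_divide_distrib)
    also have "fact n * m - fact n * j = fact (Suc n)"
      by (simp add: m_def algebra_simps)
    finally show ?thesis using Z1 by (simp add: X_def Y_def)
  qed
  finally show ?case using c by simp
qed

definition hsum :: "'a set \<Rightarrow> real" where
  "hsum A = (\<Sum>S\<in>Pow A - {{}}. (-1) ^ (card S + 1) / real (card S))"

lemma harm_Suc: "harm (Suc n) = harm n + 1 / real (Suc n)"
  by (simp add: harm_def)

lemma hsum_harm:
  assumes "finite A"
  shows "hsum A = harm (card A)"
  using assms
proof (induction A rule: finite_induct)
  case empty
  then show ?case by (simp add: hsum_def harm_def)
next
  case (insert a A)
  have tr: "(-1) ^ (card (insert a T) + 1) / real (card (insert a T)) = (-1) ^ card T / (real (card T) + 1)"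
    if "T \<in> Pow A" for T
  proof -
    have T: "finite T" "a \<notin> T" using that insert finite_subset by auto
    then show ?thesis by (simp add: algebra_simps)
  qed
  have "hsum (insert a A) = hsum A + (\<Sum>T\<in>Pow A. (-1) ^ (card (insert a T) + 1) / real (card (insert a T)))"
    unfolding hsum_def by (rule sum_Pow_insert_ne[OF insert(1,2)])
  also have "(\<Sum>T\<in>Pow A. (-1) ^ (card (insert a T) + 1) / real (card (insert a T))) = bsum 1 A"
    unfolding bsum_def by (rule sum.cong) (use tr in auto)
  also have "bsum 1 A = fact (card A) / pochhammer 1 (Suc (card A))"
    by (rule bsum_closed[OF insert(1)]) simp
  also have "\<dots> = 1 / real (Suc (card A))"
    by (simp add: pochhammer_fact[symmetric] del: of_nat_Suc)
  finally show ?case using insert harm_Suc by simp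
qed


lemma max_integral:
  assumes V: "is_simplex (V::'a::euclidean_space set)"
  shows "(\<integral>x. indicator (convex hull V) x * Max ((\<lambda>R. bary V R x) ` V) \<partial>lborel)
     = measure lborel (convex hull V) / (real DIM('a) + 1) * harm (DIM('a) + 1)"
proof -
  let ?K = "convex hull V"
  have fin: "finite V" using V simplex_finite by blast
  have ne: "V \<noteq> {}" using V unfolding is_simplex_def by auto
  have mx: "Max ((\<lambda>R. bary V R x) ` V) = (\<Sum>S\<in>Pow V - {{}}. (-1) ^ (card S + 1) * msim V S x)" for x
    using max_min[OF fin, of "\<lambda>R. bary V R x"] ne by (simp add: mmsum_def msim_def)
  have intS: "integrable lborel (\<lambda>x. indicator ?K x * msim V S x)" if "S \<in> Pow V - {{}}" for S
    using that by (intro int_cont compact_hull[OF V] msim_continuous[OF V]) auto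
  have "(\<integral>x. indicator ?K x * Max ((\<lambda>R. bary V R x) ` V) \<partial>lborel)
      = (\<integral>x. (\<Sum>S\<in>Pow V - {{}}. (-1) ^ (card S + 1) * (indicator ?K x * msim V S x)) \<partial>lborel)"
    unfolding mx by (simp add: sum_distrib_left algebra_simps)
  also have "\<dots> = (\<Sum>S\<in>Pow V - {{}}. (-1) ^ (card S + 1) * (\<integral>x. indicator ?K x * msim V S x \<partial>lborel))"
  proof -
    have "(\<integral>x. (\<Sum>S\<in>Pow V - {{}}. (-1) ^ (card S + 1) * (indicator ?K x * msim V S x)) \<partial>lborel)
       = (\<Sum>S\<in>Pow V - {{}}. (\<integral>x. (-1) ^ (card S + 1) * (indicator ?K x * msim V S x) \<partial>lborel))"
      by (rule Bochner_Integration.integral_sum) (use intS in auto)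
    then show ?thesis by simp
  qed
  also have "\<dots> = (\<Sum>S\<in>Pow V - {{}}. (-1) ^ (card S + 1) * (measure lborel ?K / (real (card S) * (real DIM('a) + 1))))"
    by (rule sum.cong) (auto simp: min_integral[OF V])
  also have "\<dots> = measure lborel ?K / (real DIM('a) + 1) * hsum V"
    unfolding hsum_def by (simp add: sum_distrib_left field_simps)
  also have "hsum V = harm (DIM('a) + 1)"
    using hsum_harm[OF fin] V by (simp add: is_simplex_def)
  finally show ?thesis .
qed


lemma dual_sub_alt: "dual_sub V P = convex hull V \<inter> (\<Inter>Q\<in>V. {x. bary V Q x \<le> bary V P x})"
  unfolding dual_sub_def by auto

lemma dual_sub_hull: "dual_sub V P \<subseteq> convex hull V"
  unfolding dual_sub_def by auto

lemma compact_dual: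
  assumes V: "is_simplex V"
  shows "compact (dual_sub V P)"
proof -
  have "closed {x. bary V Q x \<le> bary V P x}" for Q
    by (rule closed_Collect_le) (auto intro: bary_continuous[OF V])
  then have "closed (\<Inter>Q\<in>V. {x. bary V Q x \<le> bary V P x})" by auto
  then show ?thesis unfolding dual_sub_alt using compact_hull[OF V] by (simp add: compact_Int_closed)
qed

definition ties :: "'a::euclidean_space set \<Rightarrow> 'a set" where
  "ties V = (\<Union>P\<in>V. \<Union>Q\<in>V - {P}. {x. bary V P x = bary V Q x})"

lemma ties_AE:
  assumes V: "is_simplex (V::'a::euclidean_space set)"
  shows "AE x in lborel. x \<notin> ties V"
proof -
  have fin: "finite V" using V simplex_finite by blast
  have nP: "negligible (\<Union>Q\<in>V - {P}. {x. bary V P x = bary V Q x})" if "P \<in> V" for P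
  proof (rule negligible_Union)
    show "finite ((\<lambda>Q. {x. bary V P x = bary V Q x}) ` (V - {P}))" using fin by simp
    fix T assume "T \<in> (\<lambda>Q. {x. bary V P x = bary V Q x}) ` (V - {P})"
    then obtain Q where Q: "Q \<in> V - {P}" and T: "T = {x. bary V P x = bary V Q x}" by blast
    from Q have Q': "Q \<in> V" "P \<noteq> Q" by auto
    show "negligible T" unfolding T by (rule negligible_tie[OF V that Q'])
  qed
  have "negligible (ties V)" unfolding ties_def
  proof (rule negligible_Union)
    show "finite ((\<lambda>P. \<Union>Q\<in>V - {P}. {x. bary V P x = bary V Q x}) ` V)" using fin by simp
    fix T assume "T \<in> (\<lambda>P. \<Union>Q\<in>V - {P}. {x. bary V P x = bary V Q x}) ` V"
    then obtain P where P: "P \<in> V" and T: "T = (\<Union>Q\<in>V - {P}. {x. bary V P x = bary V Q x})" by blast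
    show "negligible T" unfolding T by (rule nP[OF P])
  qed
  then have "ties V \<in> null_sets lebesgue" by (simp only: negligible_iff_null_sets)
  then have "\<exists>N\<in>null_sets lborel. ties V \<subseteq> N" by (rule null_sets_completion_iff2[THEN iffD1])
  then obtain N where N: "N \<in> null_sets lborel" "ties V \<subseteq> N" by (elim bexE)
  have "AE x in lborel. x \<notin> N" by (rule AE_not_in[OF N(1)])
  then show ?thesis by (rule eventually_mono) (use N(2) in blast)
qed

lemma indicator_partition:
  assumes V: "is_simplex (V::'a::euclidean_space set)" and x: "x \<notin> ties V"
  shows "(\<Sum>P\<in>V. indicator (dual_sub V P) x) = (indicator (convex hull V) x :: real)"
proof (cases "x \<in> convex hull V")
  case False
  have "indicator (dual_sub V P) x = (0::real)" for P
    using False dual_sub_hull[of V P] by (auto simp: indicator_def)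
  then show ?thesis using False by simp
next
  case True
  have fin: "finite V" using V simplex_finite by blast
  have ne: "V \<noteq> {}" using V unfolding is_simplex_def by auto
  have "Max ((\<lambda>R. bary V R x) ` V) \<in> (\<lambda>R. bary V R x) ` V"
    by (rule Max_in) (use fin ne in auto)
  then obtain P0 where P0: "P0 \<in> V" "bary V P0 x = Max ((\<lambda>R. bary V R x) ` V)"
    by (metis (no_types, lifting) imageE)
  have le: "bary V Q x \<le> bary V P0 x" if "Q \<in> V" for Q
    unfolding P0(2) by (rule Max_ge) (use fin that in auto)
  have inP0: "x \<in> dual_sub V P0" using True le unfolding dual_sub_def by blast
  have notin: "x \<notin> dual_sub V P" if "P \<in> V" "P \<noteq> P0" for P
  proof
    assume "x \<in> dual_sub V P"
    then have "bary V P0 x \<le> bary V P x" using P0(1) unfolding dual_sub_def by blast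
    moreover have "bary V P x \<le> bary V P0 x" using le that by blast
    ultimately have "bary V P x = bary V P0 x" by simp
    then have "x \<in> {y. bary V P y = bary V P0 y}" by simp
    then have "x \<in> (\<Union>Q\<in>V - {P}. {y. bary V P y = bary V Q y})" using that P0(1) by blast
    then have "x \<in> ties V" unfolding ties_def using that(1) by blast
    then show False using x by simp
  qed
  have "(\<Sum>P\<in>V. indicator (dual_sub V P) x) = (\<Sum>P\<in>V. if P = P0 then 1 else (0::real))"
    by (rule sum.cong) (use inP0 notin in \<open>auto simp: indicator_def\<close>)
  also have "\<dots> = 1" using fin P0 by simp
  finally show ?thesis using True by simp
qed

lemma integral_partition:
  fixes F :: "'a::euclidean_space \<Rightarrow> real"
  assumes V: "is_simplex (V::'a::euclidean_space set)" and F: "continuous_on UNIV F"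
  shows "(\<integral>x. indicator (convex hull V) x * F x \<partial>lborel)
       = (\<Sum>P\<in>V. (\<integral>x. indicator (dual_sub V P) x * F x \<partial>lborel))"
proof -
  have fin: "finite V" using V simplex_finite by blast
  have Fb: "F \<in> borel_measurable borel" using F by (rule borel_measurable_continuous_onI)
  have int: "integrable lborel (\<lambda>x. indicator (dual_sub V P) x * F x)" for P
    by (rule int_cont[OF compact_dual[OF V]]) (rule continuous_on_subset[OF F], simp)
  have db: "dual_sub V P \<in> sets borel" for P using compact_dual[OF V] by (simp add: compact_imp_closed borel_closed)
  have "(\<integral>x. indicator (convex hull V) x * F x \<partial>lborel) = (\<integral>x. (\<Sum>P\<in>V. indicator (dual_sub V P) x * F x) \<partial>lborel)"
  proof (rule integral_cong_AE)
    show "(\<lambda>x. indicator (convex hull V) x * F x) \<in> borel_measurable lborel"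
      using Fb hull_borel[OF V] by simp
    show "(\<lambda>x. \<Sum>P\<in>V. indicator (dual_sub V P) x * F x) \<in> borel_measurable lborel"
      using Fb db by simp
    show "AE x in lborel. indicator (convex hull V) x * F x = (\<Sum>P\<in>V. indicator (dual_sub V P) x * F x)"
      using ties_AE[OF V] by (rule eventually_mono)
        (simp add: indicator_partition[OF V, symmetric] sum_distrib_right)
  qed
  also have "\<dots> = (\<Sum>P\<in>V. (\<integral>x. indicator (dual_sub V P) x * F x \<partial>lborel))"
    by (rule Bochner_Integration.integral_sum) (use int in auto)
  finally show ?thesis .
qed


lemma henstock_eq:
  fixes f :: "'a::euclidean_space \<Rightarrow> real"
  assumes S: "compact S" and f: "continuous_on S f"
  shows "integral S f = (\<integral>x. indicator S x * f x \<partial>lborel)"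
proof -
  have i: "integrable lborel (\<lambda>x. indicator S x *\<^sub>R f x)" by (rule borel_integrable_compact[OF S f])
  have m: "(\<lambda>x. indicator S x *\<^sub>R f x) \<in> borel_measurable lborel"
    using i by (rule borel_measurable_integrable)
  have si: "set_integrable lebesgue S f"
    unfolding set_integrable_def using i m by (simp add: integrable_completion)
  have "integral S f = (LINT x:S|lebesgue. f x)"
    using set_lebesgue_integral_eq_integral(2)[OF si] by simp
  also have "\<dots> = (\<integral>x. indicator S x *\<^sub>R f x \<partial>lebesgue)" by (simp add: set_lebesgue_integral_def)
  also have "\<dots> = (\<integral>x. indicator S x *\<^sub>R f x \<partial>lborel)" using m by (rule integral_completion)
  finally show ?thesis by simp
qed

lemma invol_all:
  assumes "invol V p" shows "(\<forall>Q\<in>V. \<phi> (p Q)) \<longleftrightarrow> (\<forall>Q\<in>V. \<phi> Q)"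
  using assms unfolding invol_def by metis

definition Jw :: "'a::euclidean_space set \<Rightarrow> 'a \<Rightarrow> ('a \<Rightarrow> real) \<Rightarrow> real" where
  "Jw V P w = (\<integral>x. indicator (dual_sub V P) x * (\<Sum>R\<in>V. w R * bary V R x) \<partial>lborel)"

lemma permap_dual:
  assumes V: "is_simplex (V::'a::euclidean_space set)" and p: "invol V p" and P: "P \<in> V"
  shows "(permap V p x \<in> dual_sub V P) \<longleftrightarrow> x \<in> dual_sub V (p P)"
proof -
  have "(permap V p x \<in> dual_sub V P) \<longleftrightarrow>
        (\<forall>Q\<in>V. 0 \<le> bary V (p Q) x) \<and> (\<forall>Q\<in>V. bary V (p Q) x \<le> bary V (p P) x)"
    unfolding dual_sub_def hull_bary[OF V] using permap_bary[OF V p] P by auto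
  also have "\<dots> \<longleftrightarrow> (\<forall>Q\<in>V. 0 \<le> bary V Q x) \<and> (\<forall>Q\<in>V. bary V Q x \<le> bary V (p P) x)"
    using invol_all[OF p, of "\<lambda>Q. 0 \<le> bary V Q x"] invol_all[OF p, of "\<lambda>Q. bary V Q x \<le> bary V (p P) x"]
    by simp
  also have "\<dots> \<longleftrightarrow> x \<in> dual_sub V (p P)"
    unfolding dual_sub_def hull_bary[OF V] by auto
  finally show ?thesis .
qed

lemma Jw_sym:
  assumes V: "is_simplex (V::'a::euclidean_space set)" and p: "invol V p" and P: "P \<in> V"
  shows "Jw V P w = Jw V (p P) (\<lambda>R. w (p R))"
proof -
  let ?K = "convex hull V"
  define F where "F = (\<lambda>x. indicator (dual_sub V P) x * (\<Sum>R\<in>V. w R * bary V R x))"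
  have Fb: "F \<in> borel_measurable borel"
    unfolding F_def using compact_dual[OF V, of P] bary_borel[OF V]
    by (intro borel_measurable_times borel_measurable_sum borel_measurable_indicator)
       (auto simp: compact_imp_closed borel_closed)
  have pP: "p P \<in> V" using p P by (simp add: invol_def)
  have s: "(\<Sum>R\<in>V. w R * bary V (p R) x) = (\<Sum>R\<in>V. w (p R) * bary V R x)" for x
  proof -
    have "(\<Sum>R\<in>V. w R * bary V (p R) x) = (\<Sum>R\<in>V. w (p R) * bary V (p (p R)) x)"
      using invol_sum[OF p, of "\<lambda>R. w R * bary V (p R) x"] by simp
    also have "\<dots> = (\<Sum>R\<in>V. w (p R) * bary V R x)"
      by (rule sum.cong) (use p in \<open>auto simp: invol_def\<close>)
    finally show ?thesis .
  qed
  have lhs: "indicator ?K x * F (permap V p x) = indicator (dual_sub V (p P)) x * (\<Sum>R\<in>V. w (p R) * bary V R x)" for x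
  proof -
    have "(\<Sum>R\<in>V. w R * bary V R (permap V p x)) = (\<Sum>R\<in>V. w R * bary V (p R) x)"
      by (rule sum.cong) (auto simp: permap_bary[OF V p])
    moreover have "indicator ?K x * indicator (dual_sub V (p P)) x = (indicator (dual_sub V (p P)) x :: real)"
      using dual_sub_hull[of V "p P"] by (auto simp: indicator_def)
    ultimately show ?thesis unfolding F_def using permap_dual[OF V p P] s
      by (simp add: indicator_def)
  qed
  have rhs: "indicator ?K x * F x = F x" for x
    unfolding F_def using dual_sub_hull[of V P] by (auto simp: indicator_def)
  have "Jw V P w = (\<integral>x. F x \<partial>lborel)" by (simp add: Jw_def F_def)
  also have "\<dots> = (\<integral>x. indicator ?K x * F x \<partial>lborel)" by (simp only: rhs)
  also have "\<dots> = (\<integral>x. indicator ?K x * F (permap V p x) \<partial>lborel)"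
    using sym_integral[OF V p Fb] by simp
  also have "\<dots> = Jw V (p P) (\<lambda>R. w (p R))" by (simp add: lhs Jw_def)
  finally show ?thesis .
qed


definition sw :: "'a \<Rightarrow> 'a \<Rightarrow> 'a \<Rightarrow> 'a" where
  "sw A B x = (if x = A then B else if x = B then A else x)"

lemma invol_sw: "A \<in> V \<Longrightarrow> B \<in> V \<Longrightarrow> invol V (sw A B)"
  unfolding invol_def sw_def by auto

lemma sw_sw: "sw A B (sw A B x) = x" unfolding sw_def by auto

definition bb :: "'a::euclidean_space set \<Rightarrow> 'a \<Rightarrow> 'a \<Rightarrow> real" where
  "bb V P Q = (\<integral>x. indicator (dual_sub V P) x * bary V Q x \<partial>lborel)"

definition cc :: "'a::euclidean_space set \<Rightarrow> 'a \<Rightarrow> real" where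
  "cc V P = (\<integral>x. indicator (dual_sub V P) x * 1 \<partial>lborel)"

lemma Jw_e:
  assumes V: "is_simplex V" and Q: "Q \<in> V"
  shows "Jw V P (\<lambda>R. if R = Q then 1 else 0) = bb V P Q"
proof -
  have fin: "finite V" using V simplex_finite by blast
  have "(\<Sum>R\<in>V. (if R = Q then 1 else 0) * bary V R x) = (\<Sum>R\<in>V. if R = Q then bary V Q x else 0)" for x
    by (rule sum.cong) auto
  also have "(\<Sum>R\<in>V. if R = Q then bary V Q x else 0) = bary V Q x" for x using fin Q by simp
  finally show ?thesis unfolding Jw_def bb_def by simp
qed

lemma Jw_1:
  assumes V: "is_simplex V"
  shows "Jw V P (\<lambda>R. 1) = cc V P"
  unfolding Jw_def cc_def using bary_props(2)[OF V] by simp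

lemma bb_sym:
  assumes V: "is_simplex (V::'a::euclidean_space set)" and P: "P \<in> V" and Q: "Q \<in> V"
    and A: "A \<in> V" and B: "B \<in> V"
  shows "bb V P Q = bb V (sw A B P) (sw A B Q)"
proof -
  let ?p = "sw A B"
  have p: "invol V ?p" by (rule invol_sw[OF A B])
  have pQ: "?p Q \<in> V" using p Q by (simp add: invol_def)
  have "bb V P Q = Jw V P (\<lambda>R. if R = Q then 1 else 0)" using Jw_e[OF V Q] by simp
  also have "\<dots> = Jw V (?p P) (\<lambda>R. if ?p R = Q then 1 else 0)" by (rule Jw_sym[OF V p P])
  also have "(\<lambda>R. if ?p R = Q then 1 else (0::real)) = (\<lambda>R. if R = ?p Q then 1 else 0)"
    by (rule ext) (metis sw_sw)
  also have "Jw V (?p P) \<dots> = bb V (?p P) (?p Q)" by (rule Jw_e[OF V pQ])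
  finally show ?thesis .
qed

lemma cc_sym:
  assumes V: "is_simplex (V::'a::euclidean_space set)" and P: "P \<in> V" and A: "A \<in> V" and B: "B \<in> V"
  shows "cc V P = cc V (sw A B P)"
proof -
  have p: "invol V (sw A B)" by (rule invol_sw[OF A B])
  show ?thesis using Jw_sym[OF V p P, of "\<lambda>_. 1"] Jw_1[OF V] by simp
qed

lemma continuous_on_Max_img:
  fixes f :: "'r \<Rightarrow> 'x::topological_space \<Rightarrow> real"
  assumes "finite S" "S \<noteq> {}" "\<And>R. R \<in> S \<Longrightarrow> continuous_on U (f R)"
  shows "continuous_on U (\<lambda>x. Max ((\<lambda>R. f R x) ` S))"
  using assms
proof (induction S rule: finite_ne_induct)
  case (singleton a)
  then show ?case by simp
next
  case (insert a A)
  have eq: "(\<lambda>x. Max ((\<lambda>R. f R x) ` insert a A)) = (\<lambda>x. max (f a x) (Max ((\<lambda>R. f R x) ` A)))"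
    using insert.hyps by (simp add: Max_insert)
  show ?case unfolding eq by (rule continuous_on_max) (use insert in auto)
qed

lemma simplex_main:
  assumes V: "is_simplex (V::'a::euclidean_space set)" and P: "P \<in> V"
  shows "bb V P P = m1 DIM('a) * measure lborel (convex hull V)"
    and "\<And>Q. Q \<in> V \<Longrightarrow> Q \<noteq> P \<Longrightarrow> bb V P Q = m2 DIM('a) * measure lborel (convex hull V)"
proof -
  let ?K = "convex hull V"
  define mK where "mK = measure lborel ?K"
  define d where "d = DIM('a)"
  have fin: "finite V" using V simplex_finite by blast
  have cV: "card V = d + 1" using V by (simp add: is_simplex_def d_def)
  have ne: "V \<noteq> {}" using cV fin by auto
  have d1: "d \<ge> 1" by (simp add: d_def DIM_positive)
  define a where "a = bb V P P"
  have aeq: "bb V P' P' = a" if "P' \<in> V" for P'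
    using bb_sym[OF V P P P that, unfolded sw_def] by (simp add: a_def)
  have Mx_cont: "continuous_on UNIV (\<lambda>x. Max ((\<lambda>R. bary V R x) ` V))"
    by (rule continuous_on_Max_img[OF fin ne]) (rule bary_continuous[OF V])
  have "(\<integral>x. indicator ?K x * Max ((\<lambda>R. bary V R x) ` V) \<partial>lborel)
      = (\<Sum>P'\<in>V. (\<integral>x. indicator (dual_sub V P') x * Max ((\<lambda>R. bary V R x) ` V) \<partial>lborel))"
    by (rule integral_partition[OF V Mx_cont])
  also have "\<dots> = (\<Sum>P'\<in>V. bb V P' P')"
  proof (rule sum.cong[OF refl])
    fix P' assume P': "P' \<in> V"
    have pw: "indicator (dual_sub V P') x * Max ((\<lambda>R. bary V R x) ` V) = indicator (dual_sub V P') x * bary V P' x" for x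
    proof (cases "x \<in> dual_sub V P'")
      case True
      have "Max ((\<lambda>R. bary V R x) ` V) = bary V P' x"
        by (rule Max_eqI) (use fin P' True in \<open>auto simp: dual_sub_def\<close>)
      then show ?thesis by simp
    qed simp
    show "(\<integral>x. indicator (dual_sub V P') x * Max ((\<lambda>R. bary V R x) ` V) \<partial>lborel) = bb V P' P'"
      unfolding bb_def by (simp only: pw)
  qed
  also have "\<dots> = real (d + 1) * a" using aeq cV by simp
  finally have sa: "real (d + 1) * a = mK / (real d + 1) * harm (d + 1)"
    using max_integral[OF V] by (simp add: mK_def d_def)
  have a_val: "a = m1 d * mK"
  proof -
    have "a = (real (d + 1) * a) / real (d + 1)" by simp
    also have "\<dots> = mK / (real d + 1) * harm (d + 1) / real (d + 1)" by (simp only: sa)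
    also have "harm (d + 1) = harm d + 1 / (real d + 1)" using harm_Suc[of d] by simp
    finally have "a = mK / (real d + 1) * (harm d + 1 / (real d + 1)) / real (d + 1)" .
    then show ?thesis by (simp add: m1_def field_simps power2_eq_square power3_eq_cube)
  qed
  then show "bb V P P = m1 DIM('a) * measure lborel ?K" by (simp add: a_def mK_def d_def)
  define c where "c = cc V P"
  have ceq: "cc V P' = c" if "P' \<in> V" for P'
    using cc_sym[OF V P P that, unfolded sw_def] by (simp add: c_def)
  have "(\<integral>x. indicator ?K x * (1::real) \<partial>lborel) = (\<Sum>P'\<in>V. (\<integral>x. indicator (dual_sub V P') x * (1::real) \<partial>lborel))"
    by (rule integral_partition[OF V, of "\<lambda>_. 1"]) simp
  also have "\<dots> = (\<Sum>P'\<in>V. cc V P')" unfolding cc_def ..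
  also have "\<dots> = (\<Sum>P'\<in>V. c)" by (rule sum.cong) (auto simp: ceq)
  also have "\<dots> = real (d + 1) * c" using cV by simp
  finally have "real (d + 1) * c = mK"
    using fin_hull[OF V] hull_borel[OF V] by (simp add: mK_def measure_def)
  then have c_val: "c = mK / (real d + 1)" by (simp add: field_simps)
  have int: "integrable lborel (\<lambda>x. indicator (dual_sub V P) x * bary V Q x)" for Q
    by (rule int_cont[OF compact_dual[OF V]]) (rule bary_continuous[OF V])
  have row: "(\<Sum>Q\<in>V. bb V P Q) = c"
  proof -
    have "(\<Sum>Q\<in>V. bb V P Q) = (\<integral>x. (\<Sum>Q\<in>V. indicator (dual_sub V P) x * bary V Q x) \<partial>lborel)"
      unfolding bb_def by (rule Bochner_Integration.integral_sum[symmetric]) (use int in auto)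
    also have "\<dots> = c" unfolding c_def cc_def
      using bary_props(2)[OF V] by (simp add: sum_distrib_left[symmetric])
    finally show ?thesis .
  qed
  fix Q assume Q: "Q \<in> V" "Q \<noteq> P"
  have beq: "bb V P Q' = bb V P Q" if "Q' \<in> V" "Q' \<noteq> P" for Q'
  proof -
    have "bb V P Q = bb V (sw Q Q' P) (sw Q Q' Q)" by (rule bb_sym[OF V P Q(1) Q(1) that(1)])
    also have "sw Q Q' P = P" using Q that by (simp add: sw_def)
    also have "sw Q Q' Q = Q'" by (simp add: sw_def)
    finally show ?thesis by simp
  qed
  have "(\<Sum>Q\<in>V. bb V P Q) = bb V P P + (\<Sum>Q'\<in>V - {P}. bb V P Q')"
    using fin P by (simp add: sum.remove)
  also have "(\<Sum>Q'\<in>V - {P}. bb V P Q') = real d * bb V P Q"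
    using beq cV fin P by (simp add: card_Diff_singleton)
  finally have "a + real d * bb V P Q = c" using row by (simp add: a_def)
  then have "bb V P Q = (c - a) / real d" using d1 by (simp add: field_simps)
  also have "\<dots> = m2 d * mK"
  proof -
    have hd: "harm (d + 1) = harm d + 1 / (real d + 1)" using harm_Suc[of d] by simp
    have Dp: "real d > 0" using d1 by simp
    define u where "u = real d + 1"
    have up: "u > 0" by (simp add: u_def)
    have cv: "c = mK / u" using c_val by (simp add: u_def)
    have av: "a = 1 / u ^ 3 * (1 + u * harm d) * mK" using a_val by (simp add: m1_def u_def)
    have m2v: "m2 d = 1 / (real d * u ^ 3) * (real d * real d + 2 * real d - u * harm d)"
      by (simp add: m2_def u_def power2_eq_square)
    have du: "real d * real d + 2 * real d = u * u - 1" by (simp add: u_def algebra_simps)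
    show ?thesis unfolding cv av m2v du using Dp up
      by (simp add: field_simps power3_eq_cube)
  qed
  finally show "bb V P Q = m2 DIM('a) * measure lborel ?K" by (simp add: mK_def d_def)
qed


lemma mesh_simplex: "simplicial_mesh T \<Longrightarrow> K \<in> T \<Longrightarrow> is_simplex K"
  by (simp add: simplicial_mesh_def)

lemma mesh_finite: "simplicial_mesh T \<Longrightarrow> finite T"
  by (simp add: simplicial_mesh_def)

lemma mesh_inter: "simplicial_mesh T \<Longrightarrow> K \<in> T \<Longrightarrow> K' \<in> T \<Longrightarrow>
    convex hull K \<inter> convex hull K' = convex hull (K \<inter> K')"
  by (simp add: simplicial_mesh_def)

lemma mesh_negl:
  assumes T: "simplicial_mesh (T::'a::euclidean_space set set)" and K: "K \<in> T" and K': "K' \<in> T" and ne: "K \<noteq> K'"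
  shows "negligible (convex hull K \<inter> convex hull K')"
proof -
  have sK: "is_simplex K" "is_simplex K'" using T K K' mesh_simplex by blast+
  have fK: "finite K" using sK simplex_finite by blast
  have finI: "finite (K \<inter> K')" using fK by simp
  have "card (K \<inter> K') \<le> DIM('a)"
  proof (rule ccontr)
    assume "\<not> ?thesis"
    then have "card (K \<inter> K') \<ge> card K" "card (K \<inter> K') \<ge> card K'"
      using sK by (auto simp: is_simplex_def)
    then have "K \<inter> K' = K" "K \<inter> K' = K'"
      using card_seteq[OF fK, of "K \<inter> K'"] card_seteq[of K' "K \<inter> K'"] sK
      by (auto simp: is_simplex_def)
    then show False using ne by auto
  qed
  then have "interior (convex hull (K \<inter> K')) = {}" using empty_interior_convex_hull finI by blast
  then have "negligible (convex hull (K \<inter> K'))" using negligible_convex_interior convex_convex_hull by blast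
  then show ?thesis using mesh_inter[OF T K K'] by simp
qed

lemma nodal_on_hull:
  assumes T: "simplicial_mesh (T::'a::euclidean_space set set)" and K: "K \<in> T" and x: "x \<in> convex hull K"
  shows "nodal_basis T Q x = (if Q \<in> K then bary K Q x else 0)"
proof (cases "\<exists>K'\<in>T. Q \<in> K' \<and> x \<in> convex hull K'")
  case True
  define K'' where "K'' = (SOME K'. K' \<in> T \<and> Q \<in> K' \<and> x \<in> convex hull K')"
  have K'': "K'' \<in> T" "Q \<in> K''" "x \<in> convex hull K''"
    using someI_ex[of "\<lambda>K'. K' \<in> T \<and> Q \<in> K' \<and> x \<in> convex hull K'"] True unfolding K''_def by blast+
  have nb: "nodal_basis T Q x = bary K'' Q x" using True by (simp add: nodal_basis_def K''_def)
  have sK: "is_simplex K" "is_simplex K''" using T K K''(1) mesh_simplex by blast+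
  have finW: "finite (K \<inter> K'')" using sK(1) simplex_finite by blast
  have "x \<in> convex hull (K \<inter> K'')" using mesh_inter[OF T K K''(1)] x K''(3) by blast
  then obtain u where u: "\<forall>v\<in>K \<inter> K''. 0 \<le> u v" "sum u (K \<inter> K'') = 1" "(\<Sum>v\<in>K \<inter> K''. u v *\<^sub>R v) = x"
    unfolding convex_hull_finite[OF finW] by blast
  have b1: "bary K R x = (if R \<in> K \<inter> K'' then u R else 0)" for R
    using bary_subset_comb[OF sK(1) _ u(2), of R] u(3) by auto
  have b2: "bary K'' R x = (if R \<in> K \<inter> K'' then u R else 0)" for R
    using bary_subset_comb[OF sK(2) _ u(2), of R] u(3) by auto
  show ?thesis unfolding nb using b1 b2 K''(2) by auto
next
  case False
  then have "Q \<notin> K" using K x by blast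
  moreover have "nodal_basis T Q x = 0" unfolding nodal_basis_def by (rule if_not_P[OF False])
  ultimately show ?thesis by simp
qed

lemma integrable_compact_cont:
  fixes f :: "'a::euclidean_space \<Rightarrow> real"
  assumes S: "compact S" and f: "continuous_on S f"
  shows "f integrable_on S"
proof -
  have i: "integrable lborel (\<lambda>x. indicator S x *\<^sub>R f x)" by (rule borel_integrable_compact[OF S f])
  have m: "(\<lambda>x. indicator S x *\<^sub>R f x) \<in> borel_measurable lborel"
    using i by (rule borel_measurable_integrable)
  have si: "set_integrable lebesgue S f"
    unfolding set_integrable_def using i m by (simp add: integrable_completion)
  show ?thesis by (rule set_lebesgue_integral_eq_integral(1)[OF si])
qed


lemma mass_formula:
  assumes T: "simplicial_mesh (T::'a::euclidean_space set set)"
  shows "mass T P Q = (\<Sum>K\<in>{K\<in>T. P \<in> K}. if Q \<in> K then integral (dual_sub K P) (bary K Q) else 0)"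
proof -
  let ?TP = "{K\<in>T. P \<in> K}"
  have fin: "finite ?TP" using mesh_finite[OF T] by simp
  have each: "(nodal_basis T Q has_integral (if Q \<in> K then integral (dual_sub K P) (bary K Q) else 0)) (dual_sub K P)"
    if K: "K \<in> ?TP" for K
  proof -
    have sK: "is_simplex K" using K T mesh_simplex by blast
    have h: "((\<lambda>x. if Q \<in> K then bary K Q x else 0) has_integral (if Q \<in> K then integral (dual_sub K P) (bary K Q) else 0)) (dual_sub K P)"
    proof (cases "Q \<in> K")
      case True
      have "bary K Q integrable_on dual_sub K P"
        by (rule integrable_compact_cont[OF compact_dual[OF sK]]) (rule bary_continuous[OF sK])
      then show ?thesis using True by (simp add: has_integral_integral)
    next
      case False
      then show ?thesis by simp
    qed
    show ?thesis
    proof (rule has_integral_eq[OF _ h])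
      fix x assume "x \<in> dual_sub K P"
      then have "x \<in> convex hull K" using dual_sub_hull by blast
      then show "(if Q \<in> K then bary K Q x else 0) = nodal_basis T Q x"
        using nodal_on_hull[OF T _ , of K x Q] K by simp
    qed
  qed
  have neg: "pairwise (\<lambda>K K'. negligible (dual_sub K P \<inter> dual_sub K' P)) ?TP"
  proof (rule pairwiseI)
    fix K K' assume "K \<in> ?TP" "K' \<in> ?TP" "K \<noteq> K'"
    then have "negligible (convex hull K \<inter> convex hull K')" using mesh_negl[OF T] by blast
    moreover have "dual_sub K P \<inter> dual_sub K' P \<subseteq> convex hull K \<inter> convex hull K'"
      using dual_sub_hull by blast
    ultimately show "negligible (dual_sub K P \<inter> dual_sub K' P)" by (rule negligible_subset)
  qed
  have "(nodal_basis T Q has_integral (\<Sum>K\<in>?TP. if Q \<in> K then integral (dual_sub K P) (bary K Q) else 0))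
          (\<Union>K\<in>?TP. dual_sub K P)"
    by (rule has_integral_UN[OF fin each neg])
  moreover have "(\<Union>K\<in>?TP. dual_sub K P) = dual_elem T P" by (simp add: dual_elem_def)
  ultimately show ?thesis unfolding mass_def by (simp add: integral_unique)
qed

lemma patch_measure:
  assumes T: "simplicial_mesh (T::'a::euclidean_space set set)"
  shows "measure lebesgue (patch T P) = (\<Sum>K\<in>{K\<in>T. P \<in> K}. measure lebesgue (convex hull K))"
proof -
  have "measure lebesgue (\<Union>((\<lambda>K. convex hull K) ` {K\<in>T. P \<in> K})) = (\<Sum>K\<in>{K\<in>T. P \<in> K}. measure lebesgue (convex hull K))"
  proof (rule measure_negligible_finite_Union_image)
    show "finite {K\<in>T. P \<in> K}" using mesh_finite[OF T] by simp
    show "convex hull K \<in> lmeasurable" if "K \<in> {K\<in>T. P \<in> K}" for K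
      using that T mesh_simplex compact_hull lmeasurable_compact by blast
    show "pairwise (\<lambda>K K'. negligible (convex hull K \<inter> convex hull K')) {K\<in>T. P \<in> K}"
      by (rule pairwiseI) (use mesh_negl[OF T] in blast)
  qed
  moreover have "\<Union>((\<lambda>K. convex hull K) ` {K\<in>T. P \<in> K}) = patch T P" by (simp add: patch_def)
  ultimately show ?thesis by simp
qed

lemma patch2_measure:
  assumes T: "simplicial_mesh (T::'a::euclidean_space set set)"
  shows "measure lebesgue (patch T P \<inter> patch T Q) = (\<Sum>K\<in>{K\<in>T. P \<in> K \<and> Q \<in> K}. measure lebesgue (convex hull K))"
proof -
  let ?TPQ = "{K\<in>T. P \<in> K \<and> Q \<in> K}"
  define U where "U = \<Union>((\<lambda>K. convex hull K) ` ?TPQ)"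
  define W where "W = patch T P \<inter> patch T Q"
  define Z where "Z = \<Union>((\<lambda>(K,K'). convex hull K \<inter> convex hull K') ` {(K,K'). K \<in> T \<and> K' \<in> T \<and> K \<noteq> K'})"
  have finT: "finite T" by (rule mesh_finite[OF T])
  have mU: "measure lebesgue U = (\<Sum>K\<in>?TPQ. measure lebesgue (convex hull K))"
    unfolding U_def
  proof (rule measure_negligible_finite_Union_image)
    show "finite ?TPQ" using finT by simp
    show "convex hull K \<in> lmeasurable" if "K \<in> ?TPQ" for K
      using that T mesh_simplex compact_hull lmeasurable_compact by blast
    show "pairwise (\<lambda>K K'. negligible (convex hull K \<inter> convex hull K')) ?TPQ"
      by (rule pairwiseI) (use mesh_negl[OF T] in blast)
  qed
  have Ulm: "U \<in> lmeasurable"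
    unfolding U_def using finT T mesh_simplex compact_hull lmeasurable_compact
    by (intro fmeasurable.finite_UN) auto
  have Zneg: "negligible Z"
    unfolding Z_def
  proof (rule negligible_Union)
    have "{(K,K'). K \<in> T \<and> K' \<in> T \<and> K \<noteq> K'} \<subseteq> T \<times> T" by auto
    then have "finite {(K,K'). K \<in> T \<and> K' \<in> T \<and> K \<noteq> K'}" using finT finite_subset by blast
    then show "finite ((\<lambda>(K,K'). convex hull K \<inter> convex hull K') ` {(K,K'). K \<in> T \<and> K' \<in> T \<and> K \<noteq> K'})"
      by simp
    fix X assume "X \<in> (\<lambda>(K,K'). convex hull K \<inter> convex hull K') ` {(K,K'). K \<in> T \<and> K' \<in> T \<and> K \<noteq> K'}"
    then obtain K K' where KK: "K \<in> T" "K' \<in> T" "K \<noteq> K'" and X: "X = convex hull K \<inter> convex hull K'" by auto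
    show "negligible X" unfolding X by (rule mesh_negl[OF T KK])
  qed
  have UW: "U \<subseteq> W" unfolding U_def W_def patch_def by blast
  have WU: "W - U \<subseteq> Z"
  proof
    fix x assume x: "x \<in> W - U"
    then obtain K K' where K: "K \<in> T" "P \<in> K" "x \<in> convex hull K" and K': "K' \<in> T" "Q \<in> K'" "x \<in> convex hull K'"
      unfolding W_def patch_def by blast
    have "K \<noteq> K'"
    proof
      assume "K = K'"
      then have "x \<in> U" unfolding U_def using K K' by blast
      then show False using x by blast
    qed
    then show "x \<in> Z" unfolding Z_def using K K' by blast
  qed
  have "measure lebesgue W = measure lebesgue U"
  proof (rule measure_negligible_symdiff[OF Ulm])
    have "U - W \<union> (W - U) \<subseteq> Z" using UW WU by blast
    then show "negligible (U - W \<union> (W - U))" using Zneg negligible_subset by blast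
  qed
  then show ?thesis using mU unfolding W_def by simp
qed


lemma simplex_henstock:
  assumes V: "is_simplex (V::'a::euclidean_space set)" and Q: "Q \<in> V"
  shows "integral (dual_sub V P) (bary V Q) = bb V P Q"
  unfolding bb_def by (rule henstock_eq[OF compact_dual[OF V] bary_continuous[OF V]])

lemma hull_meas: "is_simplex V \<Longrightarrow> measure lebesgue (convex hull V) = measure lborel (convex hull V)"
  using hull_borel by (metis measure_completion sets_lborel)

lemma m_sum: "m1 DIM('a::euclidean_space) + real DIM('a) * m2 DIM('a) = 1 / (real DIM('a) + 1)"
proof -
  define d where "d = real DIM('a)"
  have dp: "d > 0" by (simp add: d_def DIM_positive)
  define u where "u = d + 1"
  have up: "u > 0" using dp by (simp add: u_def)
  have "m1 DIM('a) + real DIM('a) * m2 DIM('a)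
      = 1 / u ^ 3 * (1 + u * harm DIM('a)) + d * (1 / (d * u ^ 3) * (d * d + 2 * d - u * harm DIM('a)))"
    by (simp add: m1_def m2_def d_def u_def power2_eq_square)
  also have "\<dots> = (1 + d * d + 2 * d) / u ^ 3" using dp up by (simp add: field_simps)
  also have "1 + d * d + 2 * d = u * u" by (simp add: u_def algebra_simps)
  also have "u * u / u ^ 3 = 1 / u" using up by (simp add: power3_eq_cube)
  finally show ?thesis by (simp add: u_def d_def)
qed

theorem mainTheorem12:
  shows "m1 DIM('a::euclidean_space) + real DIM('a) * m2 DIM('a) = 1 / (real DIM('a) + 1)
    \<and> (\<forall>V::'a set. is_simplex V \<longrightarrow>
         (\<forall>P\<in>V. integral (dual_sub V P) (bary V P) = m1 DIM('a) * measure lebesgue (convex hull V)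
               \<and> (\<forall>Q\<in>V. Q \<noteq> P \<longrightarrow>
                    integral (dual_sub V P) (bary V Q) = m2 DIM('a) * measure lebesgue (convex hull V))))
    \<and> (\<forall>T::'a set set. simplicial_mesh T \<longrightarrow>
         (\<forall>P Q. interior_vertex T P \<and> interior_vertex T Q \<longrightarrow>
            (P = Q \<longrightarrow> mass T P P = m1 DIM('a) * measure lebesgue (patch T P))
          \<and> (P \<noteq> Q \<longrightarrow> mass T P Q = m2 DIM('a) * measure lebesgue (patch T P \<inter> patch T Q))
          \<and> mass T P Q = mass T Q P))"
proof -
  have S1: "integral (dual_sub V P) (bary V P) = m1 DIM('a) * measure lebesgue (convex hull V)"
    if "is_simplex (V::'a set)" "P \<in> V" for V P
    using simplex_henstock[OF that(1,2)] simplex_main(1)[OF that] hull_meas[OF that(1)] by simp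
  have S2: "integral (dual_sub V P) (bary V Q) = m2 DIM('a) * measure lebesgue (convex hull V)"
    if "is_simplex (V::'a set)" "P \<in> V" "Q \<in> V" "Q \<noteq> P" for V P Q
    using simplex_henstock[OF that(1,3)] simplex_main(2)[OF that(1,2,3,4)] hull_meas[OF that(1)] by simp
  have M_diag: "mass T P P = m1 DIM('a) * measure lebesgue (patch T P)"
    if T: "simplicial_mesh (T::'a set set)" for T P
  proof -
    have "mass T P P = (\<Sum>K\<in>{K\<in>T. P \<in> K}. if P \<in> K then integral (dual_sub K P) (bary K P) else 0)"
      by (rule mass_formula[OF T])
    also have "\<dots> = (\<Sum>K\<in>{K\<in>T. P \<in> K}. m1 DIM('a) * measure lebesgue (convex hull K))"
      by (rule sum.cong) (use S1 T mesh_simplex in auto)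
    also have "\<dots> = m1 DIM('a) * measure lebesgue (patch T P)"
      by (simp add: patch_measure[OF T] sum_distrib_left)
    finally show ?thesis .
  qed
  have M_off: "mass T P Q = m2 DIM('a) * measure lebesgue (patch T P \<inter> patch T Q)"
    if T: "simplicial_mesh (T::'a set set)" and PQ: "P \<noteq> Q" for T P Q
  proof -
    have finT: "finite T" by (rule mesh_finite[OF T])
    have "mass T P Q = (\<Sum>K\<in>{K\<in>T. P \<in> K}. if Q \<in> K then integral (dual_sub K P) (bary K Q) else 0)"
      by (rule mass_formula[OF T])
    also have "\<dots> = (\<Sum>K\<in>{K\<in>T. P \<in> K}. if Q \<in> K then m2 DIM('a) * measure lebesgue (convex hull K) else 0)"
    proof (rule sum.cong[OF refl])
      fix K assume K: "K \<in> {K\<in>T. P \<in> K}"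
      have sK: "is_simplex K" using K T mesh_simplex by blast
      have QP: "Q \<noteq> P" using PQ by simp
      show "(if Q \<in> K then integral (dual_sub K P) (bary K Q) else 0)
          = (if Q \<in> K then m2 DIM('a) * measure lebesgue (convex hull K) else 0)"
        using S2[OF sK _ _ QP] K by auto
    qed
    also have "\<dots> = (\<Sum>K\<in>{K\<in>{K\<in>T. P \<in> K}. Q \<in> K}. m2 DIM('a) * measure lebesgue (convex hull K))"
      by (rule sum.inter_filter[symmetric]) (use finT in simp)
    also have "{K\<in>{K\<in>T. P \<in> K}. Q \<in> K} = {K\<in>T. P \<in> K \<and> Q \<in> K}" by auto
    also have "(\<Sum>K\<in>{K\<in>T. P \<in> K \<and> Q \<in> K}. m2 DIM('a) * measure lebesgue (convex hull K))
        = m2 DIM('a) * measure lebesgue (patch T P \<inter> patch T Q)"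
      by (simp add: patch2_measure[OF T] sum_distrib_left)
    finally show ?thesis .
  qed
  show ?thesis
  proof (intro conjI allI impI ballI)
    show "m1 DIM('a) + real DIM('a) * m2 DIM('a) = 1 / (real DIM('a) + 1)" by (rule m_sum)
  next
    fix V :: "'a set" and P assume "is_simplex V" "P \<in> V"
    then show "integral (dual_sub V P) (bary V P) = m1 DIM('a) * measure lebesgue (convex hull V)"
      by (rule S1)
  next
    fix V :: "'a set" and P Q assume "is_simplex V" "P \<in> V" "Q \<in> V" "Q \<noteq> P"
    then show "integral (dual_sub V P) (bary V Q) = m2 DIM('a) * measure lebesgue (convex hull V)"
      by (rule S2)
  next
    fix T :: "'a set set" and P Q :: 'a assume "simplicial_mesh T" "P = Q"
    then show "mass T P P = m1 DIM('a) * measure lebesgue (patch T P)" using M_diag by blast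
  next
    fix T :: "'a set set" and P Q :: 'a assume "simplicial_mesh T" "P \<noteq> Q"
    then show "mass T P Q = m2 DIM('a) * measure lebesgue (patch T P \<inter> patch T Q)" using M_off by blast
  next
    fix T :: "'a set set" and P Q :: 'a assume T: "simplicial_mesh T"
    show "mass T P Q = mass T Q P"
    proof (cases "P = Q")
      case False
      then show ?thesis using M_off[OF T False] M_off[OF T, of Q P] by (simp add: Int_commute)
    qed simp
  qed
qed


end
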